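(* Let $\lambda<1$, $K=\ln(n)/\ln(1/\lambda)+\omega(1)$ and $K=o(n/\ln(n))$, and let $\Gamma$ be the path on $K$ vertices. Let $C$ be the connected component of $G$ containing the longest path, and let $C'$ be obtained from $C$ by applying $\sqrt K$ times the peeling operation, which removes all degree-one nodes. Then under $\mathbb{P}_1$, with high probability both $C'$ and its intersection with the planted path have size $K\pm o(K)$.
   Context: Model: $\mathbb{P}_1$: $G=G_0\cup G'$ with $G_0\sim\mathcal G(n,\lambda/n)$ and $G'$ the image of the path $1-2-\cdots-K$ under a uniformly random injection $[K]\to[n]$ independent of $G_0$ (the planted path). With high probability means with probability $1-o(1)$ as $n\to\infty$. *)

theory Defs
  imports "HOL-Probability.Probability"
begin

text \<open>Graphs on the vertex set {0..<n}: an edge set is a set of 2-element subsets.\<close>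

definition all_pairs :: "nat \<Rightarrow> nat set set" where
  "all_pairs n = {e. \<exists>a b. a < n \<and> b < n \<and> a \<noteq> b \<and> e = {a, b}}"

definition erdos_renyi :: "nat \<Rightarrow> real \<Rightarrow> nat set set pmf" where
  "erdos_renyi n p =
     map_pmf (\<lambda>b. {e \<in> all_pairs n. b e})
       (Pi_pmf (all_pairs n) False (\<lambda>_. bernoulli_pmf p))"

definition random_injection :: "nat \<Rightarrow> nat \<Rightarrow> (nat \<Rightarrow> nat) pmf" where
  "random_injection n K =
     pmf_of_set {f. f \<in> {0..<K} \<rightarrow>\<^sub>E {0..<n} \<and> inj_on f {0..<K}}"

definition path_edges :: "nat \<Rightarrow> (nat \<Rightarrow> nat) \<Rightarrow> nat set set" where
  "path_edges K f = {{f i, f (Suc i)} | i. Suc i < K}"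

text \<open>Model P_1: pairs (G, V(planted path)) with G = G0 \<union> G'.\<close>
definition model_P1 :: "nat \<Rightarrow> real \<Rightarrow> nat \<Rightarrow> (nat set set \<times> nat set) pmf" where
  "model_P1 n lam K =
     map_pmf (\<lambda>(E0, f). (E0 \<union> path_edges K f, f ` {0..<K}))
       (pair_pmf (erdos_renyi n (lam / real n)) (random_injection n K))"

definition is_path :: "nat \<Rightarrow> nat set set \<Rightarrow> nat list \<Rightarrow> bool" where
  "is_path n E xs \<longleftrightarrow> xs \<noteq> [] \<and> distinct xs \<and> set xs \<subseteq> {0..<n} \<and>
     (\<forall>i. Suc i < length xs \<longrightarrow> {xs ! i, xs ! Suc i} \<in> E)"

definition is_longest_path :: "nat \<Rightarrow> nat set set \<Rightarrow> nat list \<Rightarrow> bool" where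
  "is_longest_path n E xs \<longleftrightarrow> is_path n E xs \<and>
     (\<forall>ys. is_path n E ys \<longrightarrow> length ys \<le> length xs)"

definition component :: "nat \<Rightarrow> nat set set \<Rightarrow> nat \<Rightarrow> nat set" where
  "component n E v = {u \<in> {0..<n}.
     (v, u) \<in> {(a, b). a < n \<and> b < n \<and> {a, b} \<in> E}\<^sup>*}"

definition peel :: "nat set set \<Rightarrow> nat set \<Rightarrow> nat set" where
  "peel E S = S - {v \<in> S. card {u \<in> S. u \<noteq> v \<and> {u, v} \<in> E} = 1}"

end

theory Submission
  imports Defs
begin

fun walkE :: "nat set set \<Rightarrow> nat list \<Rightarrow> bool" where
  "walkE E (x # y # xs) = ({x, y} \<in> E \<and> walkE E (y # xs))"
| "walkE E _ = True"

fun nbw :: "nat list \<Rightarrow> bool" where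
  "nbw (x # y # z # xs) = (x \<noteq> z \<and> nbw (y # z # xs))"
| "nbw _ = True"

lemma walkE_nth: "walkE E xs \<longleftrightarrow> (\<forall>i. Suc i < length xs \<longrightarrow> {xs ! i, xs ! Suc i} \<in> E)"
proof (induction E xs rule: walkE.induct)
  case (1 E x y xs)
  show ?case
    apply (simp add: 1)
    apply (rule iffI)
     apply (auto simp: nth_Cons split: nat.splits)
    done
qed auto

lemma nbw_nth: "nbw xs \<longleftrightarrow> (\<forall>i. Suc (Suc i) < length xs \<longrightarrow> xs ! i \<noteq> xs ! Suc (Suc i))"
proof (induction xs rule: nbw.induct)
  case (1 x y z xs)
  show ?case
    apply (simp add: 1)
    apply (rule iffI)
     apply (auto simp: nth_Cons split: nat.splits)
    done
qed auto

lemma walkE_append: "walkE E (xs @ y # ys) \<longleftrightarrow> walkE E (xs @ [y]) \<and> walkE E (y # ys)"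
proof (induction xs)
  case Nil thus ?case by (cases ys) auto
next
  case (Cons a xs) thus ?case by (cases xs) auto
qed

lemma nbw_append:
  assumes "nbw (xs @ [y])" "nbw (y # ys)" "xs \<noteq> [] \<Longrightarrow> ys \<noteq> [] \<Longrightarrow> last xs \<noteq> hd ys"
  shows "nbw (xs @ y # ys)"
  using assms
proof (induction xs)
  case Nil thus ?case by simp
next
  case (Cons a xs)
  show ?case
  proof (cases xs)
    case Nil
    then show ?thesis using Cons.prems by (cases ys) auto
  next
    case (Cons b xs')
    then show ?thesis using Cons.prems Cons.IH
      by (cases xs') (auto)
  qed
qed

lemma nbw_distinct: "distinct xs \<Longrightarrow> nbw xs"
  by (induction xs rule: nbw.induct) auto

lemma walkE_rev:
  "walkE E (rev xs) \<longleftrightarrow> walkE E xs"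
proof (induction xs)
  case (Cons x xs)
  show ?case
  proof (cases xs)
    case (Cons y ys)
    have "walkE E (rev (x # xs)) = walkE E (rev ys @ y # [x])" using Cons by simp
    also have "\<dots> = (walkE E (rev xs) \<and> {y, x} \<in> E)"
      by (subst walkE_append) (simp add: Cons)
    finally show ?thesis using Cons \<open>walkE E (rev xs) \<longleftrightarrow> walkE E xs\<close>
      by (auto simp: insert_commute)
  qed simp
qed simp

lemma walkE_take: "walkE E xs \<Longrightarrow> walkE E (take k xs)"
  unfolding walkE_nth by auto

lemma peel_subset: "peel E S \<subseteq> S" unfolding peel_def by auto

lemma peel_other:
  assumes "x \<in> peel E S" "y \<in> S" "y \<noteq> x" "{y, x} \<in> E"
  shows "\<exists>z\<in>S. z \<noteq> x \<and> {z, x} \<in> E \<and> z \<noteq> y"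
proof (rule ccontr)
  assume H: "\<not> ?thesis"
  have "{u \<in> S. u \<noteq> x \<and> {u, x} \<in> E} = {y}" using H assms(2-4) by auto
  then show False using assms(1) unfolding peel_def by auto
qed

lemma peel_keep:
  assumes "finite S" "x \<in> S" "a \<in> S" "b \<in> S" "a \<noteq> b" "a \<noteq> x" "b \<noteq> x" "{a, x} \<in> E" "{b, x} \<in> E"
  shows "x \<in> peel E S"
proof -
  have sub: "{a, b} \<subseteq> {u \<in> S. u \<noteq> x \<and> {u, x} \<in> E}" using assms by auto
  have "card {a, b} \<le> card {u \<in> S. u \<noteq> x \<and> {u, x} \<in> E}"
    by (rule card_mono) (use assms(1) sub in auto)
  then have "card {u \<in> S. u \<noteq> x \<and> {u, x} \<in> E} \<noteq> 1" using assms(5) by auto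
  then show ?thesis using assms(2) unfolding peel_def by auto
qed

lemma peel_iter_mono: "i \<le> j \<Longrightarrow> (peel E ^^ j) S \<subseteq> (peel E ^^ i) S"
proof (induction j)
  case 0 thus ?case by simp
next
  case (Suc j)
  show ?case
  proof (cases "i = Suc j")
    case False
    then have "i \<le> j" using Suc by simp
    then show ?thesis using Suc.IH peel_subset[of E "(peel E ^^ j) S"] by auto
  qed simp
qed

lemma peel_iter_subset: "(peel E ^^ j) S \<subseteq> S"
  using peel_iter_mono[of 0 j E S] by simp

lemma path_keep:
  assumes "finite S" "distinct q" "walkE E q" "set q \<subseteq> S" "q \<noteq> []"
    "hd q \<in> peel E S" "last q \<in> peel E S"
  shows "set q \<subseteq> peel E S"
proof
  fix x assume "x \<in> set q"
  then obtain i where i: "i < length q" "q ! i = x" by (auto simp: in_set_conv_nth)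
  show "x \<in> peel E S"
  proof (cases "i = 0")
    case True thus ?thesis using i assms(5,6) by (simp add: hd_conv_nth)
  next
    case False
    show ?thesis
    proof (cases "i = length q - 1")
      case True thus ?thesis using i assms(5,7) by (simp add: last_conv_nth)
    next
      case False2: False
      have si: "Suc (i - 1) = i" using False by simp
      have e1: "{q ! (i - 1), q ! i} \<in> E" using assms(3) i si unfolding walkE_nth
        by (metis)
      have e2: "{q ! i, q ! Suc i} \<in> E" using assms(3) i False2 unfolding walkE_nth
        by auto
      have d1: "q ! (i - 1) \<noteq> q ! Suc i" "q ! (i - 1) \<noteq> q ! i" "q ! Suc i \<noteq> q ! i"
        using assms(2) i False False2 by (auto simp: nth_eq_iff_index_eq)
      have m: "q ! (i - 1) \<in> S" "q ! Suc i \<in> S" "q ! i \<in> S"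
        using assms(4) i False False2 by auto
      show ?thesis
        using peel_keep[OF assms(1) m(3) m(1) m(2) d1] e1 e2 i(2) by (auto simp: insert_commute)
    qed
  qed
qed

lemma path_keep_iter:
  assumes "finite S" "distinct q" "walkE E q" "set q \<subseteq> S" "q \<noteq> []"
    "hd q \<in> (peel E ^^ j) S" "last q \<in> (peel E ^^ j) S"
  shows "set q \<subseteq> (peel E ^^ j) S"
  using assms(6,7)
proof (induction j)
  case 0 thus ?case using assms(4) by simp
next
  case (Suc j)
  have h: "hd q \<in> (peel E ^^ j) S" "last q \<in> (peel E ^^ j) S"
    using Suc.prems peel_iter_mono[of j "Suc j" E S] by auto
  have "set q \<subseteq> (peel E ^^ j) S" using Suc.IH[OF h] .
  moreover have "finite ((peel E ^^ j) S)" using assms(1) peel_iter_subset finite_subset by metis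
  ultimately show ?case using path_keep[OF _ assms(2,3) _ assms(5)] Suc.prems by simp
qed

lemma planted_mid:
  assumes "finite S" "\<forall>i<K. f i \<in> S" "inj_on f {0..<K}" "\<forall>i. Suc i < K \<longrightarrow> {f i, f (Suc i)} \<in> E"
  shows "j \<le> i \<Longrightarrow> i + j < K \<Longrightarrow> f i \<in> (peel E ^^ j) S"
proof (induction j arbitrary: i)
  case 0 thus ?case using assms(2) by simp
next
  case (Suc j)
  have fin: "finite ((peel E ^^ j) S)" using assms(1) peel_iter_subset finite_subset by metis
  have m: "f (i - 1) \<in> (peel E ^^ j) S" "f (Suc i) \<in> (peel E ^^ j) S" "f i \<in> (peel E ^^ j) S"
    using Suc by auto
  have d: "f (i - 1) \<noteq> f (Suc i)" "f (i - 1) \<noteq> f i" "f (Suc i) \<noteq> f i"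
  proof -
    have "i - 1 < K" "Suc i < K" "i < K" "i - 1 \<noteq> Suc i" "i - 1 \<noteq> i" using Suc.prems by auto
    then show "f (i - 1) \<noteq> f (Suc i)" "f (i - 1) \<noteq> f i" "f (Suc i) \<noteq> f i"
      using inj_on_eq_iff[OF assms(3)] by auto
  qed
  have si: "Suc (i - 1) = i" "Suc (i - 1) < K" using Suc.prems by auto
  have e1: "{f (i - 1), f i} \<in> E" using assms(4) si by metis
  have e2: "{f (Suc i), f i} \<in> E" using assms(4) Suc.prems by (auto simp: insert_commute)
  show ?case using peel_keep[OF fin m(3) m(1) m(2) d e1 e2] by simp
qed

lemma distinct_take_char: "distinct xs = (\<forall>t<length xs. xs ! t \<notin> set (take t xs))"
proof (induction xs rule: rev_induct)
  case (snoc x xs)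
  have "(\<forall>t<length (xs @ [x]). (xs @ [x]) ! t \<notin> set (take t (xs @ [x]))) =
        ((\<forall>t<length xs. xs ! t \<notin> set (take t xs)) \<and> x \<notin> set xs)"
    by (auto simp: nth_append less_Suc_eq)
  then show ?case using snoc by simp
qed simp

lemma comp_step:
  assumes "x \<in> component n E a" "{x, y} \<in> E" "y < n"
  shows "y \<in> component n E a"
  using assms unfolding component_def
  by (auto intro: rtrancl_into_rtrancl)

lemma comp_self: "a < n \<Longrightarrow> a \<in> component n E a"
  unfolding component_def by auto

lemma comp_eq:
  assumes "b \<in> component n E a"
  shows "component n E b = component n E a"
proof -
  let ?R = "{(a, b). a < n \<and> b < n \<and> {a, b} \<in> E}"
  have sym: "sym (?R\<^sup>*)" by (rule sym_rtrancl) (auto simp: sym_def insert_commute)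
  have ab: "(a, b) \<in> ?R\<^sup>*" using assms unfolding component_def by auto
  have ba: "(b, a) \<in> ?R\<^sup>*" using symD[OF sym ab] .
  show ?thesis unfolding component_def
    using ab ba by (auto intro: rtrancl_trans)
qed

lemma path_to_W:
  assumes "(a, v) \<in> {(a, b). a < n \<and> b < n \<and> {a, b} \<in> E}\<^sup>*" "a \<in> W"
  shows "v \<in> W \<or> (\<exists>p. p \<noteq> [] \<and> hd p = v \<and> last p \<in> W \<and> distinct p \<and>
            (\<forall>x\<in>set (butlast p). x \<notin> W) \<and> walkE E p)"
  using assms(1)
proof (induction rule: rtrancl_induct)
  case base thus ?case using assms(2) by simp
next
  case (step u v)
  have e: "{v, u} \<in> E" using step(2) by (simp add: insert_commute)
  show ?case
  proof (cases "v \<in> W")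
    case False
    show ?thesis
    proof (cases "u \<in> W")
      case True
      have "[v, u] \<noteq> [] \<and> hd [v, u] = v \<and> last [v, u] \<in> W \<and> distinct [v, u] \<and>
            (\<forall>x\<in>set (butlast [v, u]). x \<notin> W) \<and> walkE E [v, u]"
        using True False e by auto
      then show ?thesis by (intro disjI2 exI[of _ "[v, u]"])
    next
      case uW: False
      then obtain p where p: "p \<noteq> []" "hd p = u" "last p \<in> W" "distinct p"
        "\<forall>x\<in>set (butlast p). x \<notin> W" "walkE E p" using step(3) by blast
      show ?thesis
      proof (cases "v \<in> set p")
        case True
        then obtain xs ys where xs: "p = xs @ v # ys" by (meson split_list)
        have "walkE E (v # ys)" using p(6) walkE_append[of E xs v ys] unfolding xs by simp
        moreover have "last (v # ys) \<in> W" using p(3) xs by simp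
        moreover have "distinct (v # ys)" using p(4) xs by simp
        moreover have "\<forall>x\<in>set (butlast (v # ys)). x \<notin> W" using p(5) xs
          by (simp add: butlast_append)
        ultimately show ?thesis by (intro disjI2 exI[of _ "v # ys"] conjI) simp_all
      next
        case False2: False
        obtain ps where ps: "p = u # ps" using p(1,2) by (cases p) auto
        have "walkE E (v # p)" using p(6) e ps by simp
        moreover have "last (v # p) \<in> W" using p(1,3) by simp
        moreover have "distinct (v # p)" using p(4) False2 by simp
        moreover have "\<forall>x\<in>set (butlast (v # p)). x \<notin> W" using p(1,5) False by simp
        ultimately show ?thesis by (intro disjI2 exI[of _ "v # p"] conjI) simp_all
      qed
    qed
  qed simp
qed

lemma nb_walk_exists:
  assumes "x \<in> (peel E ^^ k) S" "y \<in> (peel E ^^ (k - 1)) S" "{x, y} \<in> E" "x \<noteq> y"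
  shows "\<exists>ws. length ws = k \<and> walkE E (y # x # ws) \<and> nbw (y # x # ws)"
  using assms
proof (induction k arbitrary: x y)
  case 0
  then show ?case by (intro exI[of _ "[]"]) (auto simp: insert_commute)
next
  case (Suc k)
  have xp: "x \<in> peel E ((peel E ^^ k) S)" using Suc.prems(1) by simp
  obtain z where z: "z \<in> (peel E ^^ k) S" "z \<noteq> x" "{z, x} \<in> E" "z \<noteq> y"
  proof -
    have "{y, x} \<in> E" "y \<noteq> x" "y \<in> (peel E ^^ k) S" using Suc.prems(2,3,4) by (auto simp: insert_commute)
    then show ?thesis using peel_other[OF xp] that by blast
  qed
  have x1: "x \<in> (peel E ^^ (k - 1)) S"
  proof -
    have "k - 1 \<le> Suc k" by simp
    then show ?thesis using Suc.prems(1) peel_iter_mono[of "k - 1" "Suc k" E S] by blast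
  qed
  obtain ws where ws: "length ws = k" "walkE E (x # z # ws)" "nbw (x # z # ws)"
    using Suc.IH[OF z(1) x1 z(3) z(2)] by blast
  show ?case using ws z Suc.prems(3)
    by (intro exI[of _ "z # ws"]) (auto simp: insert_commute)
qed

definition candA :: "nat \<Rightarrow> nat set \<Rightarrow> nat \<Rightarrow> nat list set" where
  "candA n W L = {u. length u = Suc L \<and> set u \<subseteq> {0..<n} \<and> hd u \<in> W \<and> distinct u \<and>
      (\<forall>x\<in>set (tl u). x \<notin> W)}"

definition candB :: "nat \<Rightarrow> nat set \<Rightarrow> nat \<Rightarrow> nat list set" where
  "candB n W t = {u. length u = Suc t \<and> set u \<subseteq> {0..<n} \<and> hd u \<in> W \<and> distinct (take t u) \<and>
      (\<forall>i. 0 < i \<and> i < t \<longrightarrow> u ! i \<notin> W) \<and> (u ! t \<in> W \<or> u ! t \<in> set (take t u)) \<and>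
      u ! t \<noteq> u ! (t - 1) \<and> u ! t \<noteq> u ! (t - 2)}"

lemma extract_struct:
  assumes len: "length u = Suc L" and d: "1 \<le> d" "d \<le> L"
    and dist: "distinct (take (Suc d) u)" and notW: "\<forall>i. 1 \<le> i \<and> i \<le> d \<longrightarrow> u ! i \<notin> W"
    and nb: "nbw u" and wk: "walkE E u" and prp: "\<forall>a b. {a, b} \<in> E \<longrightarrow> a \<noteq> b"
    and sub: "set u \<subseteq> {0..<n}" and hdW: "hd u \<in> W"
  shows "u \<in> candA n W L \<or> (\<exists>t. d < t \<and> t \<le> L \<and> take (Suc t) u \<in> candB n W t)"
proof (cases "\<exists>t. 1 \<le> t \<and> t \<le> L \<and> (u ! t \<in> W \<or> u ! t \<in> set (take t u))")
  case False
  have "distinct u" unfolding distinct_take_char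
  proof (intro allI impI)
    fix t assume "t < length u"
    then show "u ! t \<notin> set (take t u)" using False len by (cases t) auto
  qed
  moreover have "\<forall>x\<in>set (tl u). x \<notin> W"
  proof
    fix x assume "x \<in> set (tl u)"
    then obtain i where "i < length (tl u)" "tl u ! i = x" by (auto simp: in_set_conv_nth)
    then show "x \<notin> W" using False len by (auto simp: nth_tl)
  qed
  ultimately show ?thesis using len sub hdW by (auto simp: candA_def)
next
  case True
  define P where "P t \<longleftrightarrow> 1 \<le> t \<and> t \<le> L \<and> (u ! t \<in> W \<or> u ! t \<in> set (take t u))" for t
  define t where "t = (LEAST t. P t)"
  have Pt: "P t" unfolding t_def using True P_def by (auto intro: LeastI_ex)
  have minP: "\<And>s. s < t \<Longrightarrow> \<not> P s" unfolding t_def using not_less_Least by blast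
  have dt: "d < t"
  proof (rule ccontr)
    assume "\<not> d < t"
    then have td: "t \<le> d" by simp
    have "u ! t \<notin> W" using notW Pt td unfolding P_def by auto
    moreover have "u ! t \<notin> set (take t u)"
    proof -
      have "t < length (take (Suc d) u)" using td d len by simp
      then have "take (Suc d) u ! t \<notin> set (take t (take (Suc d) u))"
        using dist distinct_take_char by blast
      then show ?thesis using td by simp
    qed
    ultimately show False using Pt unfolding P_def by auto
  qed
  have tL: "t \<le> L" using Pt P_def by simp
  have dtk: "distinct (take t u)" unfolding distinct_take_char
  proof (intro allI impI)
    fix s assume s: "s < length (take t u)"
    then have "s < t" by simp
    then have "\<not> P s" using minP by simp
    then have "s = 0 \<or> u ! s \<notin> set (take s u)" using s tL unfolding P_def by auto
    then show "take t u ! s \<notin> set (take s (take t u))" using s \<open>s < t\<close> by auto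
  qed
  have nW: "\<forall>i. 0 < i \<and> i < t \<longrightarrow> u ! i \<notin> W"
    using minP tL unfolding P_def by auto
  have e: "{u ! (t - 1), u ! t} \<in> E"
  proof -
    have "Suc (t - 1) < length u" using dt d tL len by simp
    then have "{u ! (t - 1), u ! Suc (t - 1)} \<in> E" using wk unfolding walkE_nth by blast
    moreover have "Suc (t - 1) = t" using dt d by simp
    ultimately show ?thesis by simp
  qed
  have ne1: "u ! t \<noteq> u ! (t - 1)" using prp[rule_format, OF e] by simp
  have ne2: "u ! t \<noteq> u ! (t - 2)"
  proof -
    have "Suc (Suc (t - 2)) < length u" using dt d tL len by simp
    then have "u ! (t - 2) \<noteq> u ! Suc (Suc (t - 2))" using nb unfolding nbw_nth by blast
    moreover have "Suc (Suc (t - 2)) = t" using dt d by simp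
    ultimately show ?thesis by simp
  qed
  have st: "set (take (Suc t) u) \<subseteq> {0..<n}"
  proof
    fix x assume "x \<in> set (take (Suc t) u)"
    then have "x \<in> set u" by (rule in_set_takeD)
    then show "x \<in> {0..<n}" using sub by blast
  qed
  have hdt: "hd (take (Suc t) u) = hd u" by (cases u) auto
  have "take (Suc t) u \<in> candB n W t"
    unfolding candB_def using len tL st hdt hdW dtk nW Pt ne1 ne2 d dt
    by (simp add: P_def)
  then show ?thesis using dt tL by blast
qed

definition badU :: "nat \<Rightarrow> nat set \<Rightarrow> nat \<Rightarrow> nat set set \<Rightarrow> nat set" where
  "badU n W r G = (\<Union>d\<in>{1..n}. (\<lambda>u. u ! d) ` {u \<in> candA n W (d + r). walkE G u}) \<union>
     (\<Union>t\<in>{2..n + r}. \<Union>d\<in>{1..<t}. (\<lambda>u. u ! d) ` {u \<in> candB n W t. walkE G u})"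

definition badcount :: "nat \<Rightarrow> nat set \<Rightarrow> nat \<Rightarrow> nat set set \<Rightarrow> nat" where
  "badcount n W r G = (\<Sum>d=1..n. card {u \<in> candA n W (d + r). walkE G u}) +
     (\<Sum>t=2..n + r. (t - 1) * card {u \<in> candB n W t. walkE G u})"

lemma finite_lists_n: "finite {u :: nat list. length u = m \<and> set u \<subseteq> {0..<n}}"
  using finite_lists_length_eq[of "{0..<n}" m] by (simp add: conj_commute)

lemma finite_candA: "finite (candA n W L)"
  by (rule finite_subset[OF _ finite_lists_n[of "Suc L" n]]) (auto simp: candA_def)

lemma finite_candB: "finite (candB n W L)"
  by (rule finite_subset[OF _ finite_lists_n[of "Suc L" n]]) (auto simp: candB_def)

lemma card_badU: "card (badU n W r G) \<le> badcount n W r G"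
proof -
  let ?A = "\<Union>d\<in>{1..n}. (\<lambda>u. u ! d) ` {u \<in> candA n W (d + r). walkE G u}"
  let ?B = "\<Union>t\<in>{2..n + r}. \<Union>d\<in>{1..<t}. (\<lambda>u. u ! d) ` {u \<in> candB n W t. walkE G u}"
  have "card ?A \<le> (\<Sum>d=1..n. card ((\<lambda>u. u ! d) ` {u \<in> candA n W (d + r). walkE G u}))"
    by (rule card_UN_le) simp
  also have "\<dots> \<le> (\<Sum>d=1..n. card {u \<in> candA n W (d + r). walkE G u})"
    by (intro sum_mono card_image_le) (simp add: finite_candA)
  finally have A: "card ?A \<le> (\<Sum>d=1..n. card {u \<in> candA n W (d + r). walkE G u})" .
  have "card ?B \<le> (\<Sum>t=2..n + r. card (\<Union>d\<in>{1..<t}. (\<lambda>u. u ! d) ` {u \<in> candB n W t. walkE G u}))"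
    by (rule card_UN_le) simp
  also have "\<dots> \<le> (\<Sum>t=2..n + r. (t - 1) * card {u \<in> candB n W t. walkE G u})"
  proof (intro sum_mono)
    fix t
    have "card (\<Union>d\<in>{1..<t}. (\<lambda>u. u ! d) ` {u \<in> candB n W t. walkE G u})
          \<le> (\<Sum>d\<in>{1..<t}. card ((\<lambda>u. u ! d) ` {u \<in> candB n W t. walkE G u}))"
      by (rule card_UN_le) simp
    also have "\<dots> \<le> (\<Sum>d\<in>{1..<t}. card {u \<in> candB n W t. walkE G u})"
      by (intro sum_mono card_image_le) (simp add: finite_candB)
    also have "\<dots> = (t - 1) * card {u \<in> candB n W t. walkE G u}" by simp
    finally show "card (\<Union>d\<in>{1..<t}. (\<lambda>u. u ! d) ` {u \<in> candB n W t. walkE G u})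
          \<le> (t - 1) * card {u \<in> candB n W t. walkE G u}" .
  qed
  finally have B: "card ?B \<le> (\<Sum>t=2..n + r. (t - 1) * card {u \<in> candB n W t. walkE G u})" .
  have "card (badU n W r G) \<le> card ?A + card ?B" unfolding badU_def by (rule card_Un_le)
  then show ?thesis using A B unfolding badcount_def by linarith
qed

lemma walk_range:
  assumes "\<forall>a b. {a, b} \<in> E \<longrightarrow> a < n \<and> b < n"
  shows "walkE E (x # y # xs) \<Longrightarrow> set (x # y # xs) \<subseteq> {0..<n}"
proof (induction xs arbitrary: x y)
  case Nil thus ?case using assms by auto
next
  case (Cons z xs)
  have "walkE E (y # z # xs)" using Cons.prems by simp
  then have "set (y # z # xs) \<subseteq> {0..<n}" using Cons.IH by blast
  moreover have "x < n" using Cons.prems assms by auto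
  ultimately show ?case by auto
qed

lemma walk_in_comp:
  assumes "\<forall>a b. {a, b} \<in> E \<longrightarrow> a < n \<and> b < n"
  shows "walkE E u \<Longrightarrow> u \<noteq> [] \<Longrightarrow> hd u \<in> component n E a \<Longrightarrow> set u \<subseteq> component n E a"
proof (induction u)
  case (Cons x xs)
  show ?case
  proof (cases xs)
    case (Cons y ys)
    have e: "{x, y} \<in> E" "walkE E (y # ys)" using Cons \<open>walkE E (x # xs)\<close> by auto
    have "y < n" using e(1) assms by blast
    then have "y \<in> component n E a" using comp_step[OF _ e(1)] Cons.prems by simp
    then show ?thesis using Cons.IH Cons.prems e \<open>xs = y # ys\<close> by simp
  qed (use Cons.prems in simp)
qed simp

lemma walk_G0:
  assumes "walkE E u" "\<forall>i. Suc i < length u \<longrightarrow> u ! i \<notin> W \<or> u ! Suc i \<notin> W"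
    "\<forall>a b. {a, b} \<in> E \<longrightarrow> a \<notin> W \<longrightarrow> {a, b} \<in> G"
  shows "walkE G u"
  unfolding walkE_nth
proof (intro allI impI)
  fix i assume i: "Suc i < length u"
  have e: "{u ! i, u ! Suc i} \<in> E" using assms(1) i unfolding walkE_nth by blast
  show "{u ! i, u ! Suc i} \<in> G"
  proof (cases "u ! i \<in> W")
    case True
    then have "u ! Suc i \<notin> W" using assms(2) i by blast
    moreover have "{u ! Suc i, u ! i} \<in> E" using e by (simp add: insert_commute)
    ultimately have "{u ! Suc i, u ! i} \<in> G" using assms(3) by blast
    then show ?thesis by (simp add: insert_commute)
  next
    case False thus ?thesis using assms(3) e by blast
  qed
qed

lemma walk_planted:
  assumes "\<forall>i. Suc i < K \<longrightarrow> {f i, f (Suc i)} \<in> E" "b \<le> K"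
  shows "walkE E (map f [a..<b])"
  unfolding walkE_nth
proof (intro allI impI)
  fix i assume "Suc i < length (map f [a..<b])"
  then have "Suc (a + i) < K" "a + i < b" "Suc i < b - a" using assms(2) by auto
  then show "{map f [a..<b] ! i, map f [a..<b] ! Suc i} \<in> E" using assms(1) by simp
qed

lemma doubleton_eq: "{a, b} = {c, d} \<longleftrightarrow> (a = c \<and> b = d) \<or> (a = d \<and> b = c)"
  by (auto simp: doubleton_eq_iff)

lemma det_main:
  fixes f :: "nat \<Rightarrow> nat" and G0 :: "nat set set"
  assumes inj: "inj_on f {0..<K}" and rng: "f ` {0..<K} \<subseteq> {0..<n}" and G: "G0 \<subseteq> all_pairs n"
    and r1: "1 \<le> r" and rK: "2 * r < K"
  defines "E \<equiv> G0 \<union> path_edges K f" and "W \<equiv> f ` {0..<K}"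
  shows "(peel E ^^ r) (component n E (f 0)) - W \<subseteq> badU n W r G0"
    and "K - 2 * r \<le> card ((peel E ^^ r) (component n E (f 0)) \<inter> W)"
proof -
  define C where "C = component n E (f 0)"
  define T where "T j = (peel E ^^ j) C" for j
  have frng: "f i < n" if "i < K" for i using rng that by (auto simp: image_subset_iff)
  have Eprop: "a \<noteq> b \<and> a < n \<and> b < n" if abE: "{a, b} \<in> E" for a b
  proof (cases "{a, b} \<in> G0")
    case True
    then obtain c d where "c < n" "d < n" "c \<noteq> d" "{a, b} = {c, d}"
      using G unfolding all_pairs_def by blast
    then show ?thesis by (auto simp: doubleton_eq)
  next
    case False
    then obtain i where i: "Suc i < K" "{a, b} = {f i, f (Suc i)}"
      using abE unfolding E_def path_edges_def by blast
    have "f i \<noteq> f (Suc i)" using inj i(1) by (auto dest: inj_onD)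
    moreover have "f i < n" "f (Suc i) < n" using frng i(1) by auto
    ultimately show ?thesis using i(2) by (auto simp: doubleton_eq)
  qed
  have Eprop': "\<forall>a b. {a, b} \<in> E \<longrightarrow> a \<noteq> b" "\<forall>a b. {a, b} \<in> E \<longrightarrow> a < n \<and> b < n"
    using Eprop by blast+
  have EG0: "\<forall>a b. {a, b} \<in> E \<longrightarrow> a \<notin> W \<longrightarrow> {a, b} \<in> G0"
  proof (intro allI impI)
    fix a b assume ab: "{a, b} \<in> E" "a \<notin> W"
    show "{a, b} \<in> G0"
    proof (rule ccontr)
      assume "{a, b} \<notin> G0"
      then obtain i where i: "Suc i < K" "{a, b} = {f i, f (Suc i)}"
        using ab unfolding E_def path_edges_def by blast
      then have "a \<in> W" unfolding W_def by (auto simp: doubleton_eq)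
      then show False using ab by simp
    qed
  qed
  have pe: "\<forall>i. Suc i < K \<longrightarrow> {f i, f (Suc i)} \<in> E"
    unfolding E_def path_edges_def by blast
  have f0: "f 0 < n" using frng rK by auto
  have WC: "\<forall>i<K. f i \<in> C"
  proof (intro allI impI)
    fix i assume "i < K"
    then show "f i \<in> C"
    proof (induction i)
      case 0 thus ?case unfolding C_def using comp_self[OF f0] by simp
    next
      case (Suc i)
      then have "f i \<in> C" by simp
      moreover have "{f i, f (Suc i)} \<in> E" using pe Suc.prems by blast
      moreover have "f (Suc i) < n" using frng Suc.prems by auto
      ultimately show ?case unfolding C_def using comp_step by blast
    qed
  qed
  have Cn: "C \<subseteq> {0..<n}" unfolding C_def component_def by auto
  have finC: "finite C" using Cn finite_subset by blast
  have mid: "f i \<in> T j" if "j \<le> i" "i + j < K" for i j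
    unfolding T_def using planted_mid[OF finC WC inj pe that] .
  have part2: "K - 2 * r \<le> card (T r \<inter> W)"
  proof -
    have "f ` {r..<K - r} \<subseteq> T r \<inter> W" using mid rK unfolding W_def by auto
    moreover have "finite (T r \<inter> W)" unfolding W_def by simp
    ultimately have "card (f ` {r..<K - r}) \<le> card (T r \<inter> W)" by (rule card_mono[rotated])
    moreover have "card (f ` {r..<K - r}) = K - 2 * r"
    proof -
      have "inj_on f {r..<K - r}" using inj by (rule inj_on_subset) auto
      then show ?thesis using rK by (simp add: card_image)
    qed
    ultimately show ?thesis by simp
  qed
  then show "K - 2 * r \<le> card ((peel E ^^ r) (component n E (f 0)) \<inter> W)"
    unfolding T_def C_def .
  have Tmono: "T j \<subseteq> T i" if "i \<le> j" for i j unfolding T_def using peel_iter_mono[OF that] .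
  have TC: "T j \<subseteq> C" for j unfolding T_def by (rule peel_iter_subset)
  have part1: "T r - W \<subseteq> badU n W r G0"
  proof
    fix v assume v: "v \<in> T r - W"
    have vC: "v \<in> C" using v TC by blast
    then have vR: "(f 0, v) \<in> {(a, b). a < n \<and> b < n \<and> {a, b} \<in> E}\<^sup>*"
      unfolding C_def component_def by blast
    have f0W: "f 0 \<in> W" unfolding W_def using rK by auto
    obtain p where p: "p \<noteq> []" "hd p = v" "last p \<in> W" "distinct p"
        "\<forall>x\<in>set (butlast p). x \<notin> W" "walkE E p"
      using path_to_W[OF vR f0W] v by blast
    obtain p1 ps where pp: "p = v # p1 # ps"
    proof (cases p)
      case Nil thus ?thesis using p by simp
    next
      case (Cons a l)
      show ?thesis
      proof (cases l)
        case Nil thus ?thesis using p Cons v by simp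
      next
        case (Cons b l')
        then show ?thesis using that p(2) \<open>p = a # l\<close> by simp
      qed
    qed
    have pn: "set p \<subseteq> {0..<n}" using walk_range[OF Eprop'(2)] p(6) pp by simp
    have pC: "set p \<subseteq> C" unfolding C_def
      using walk_in_comp[OF Eprop'(2) p(6) p(1)] p(2) vC C_def by simp
    obtain i0 where i0: "i0 < K" "last p = f i0" using p(3) unfolding W_def by auto
    define idx where "idx = (if i0 \<le> r then [i0..<Suc r] else rev [r..<Suc i0])"
    define seg where "seg = map f idx"
    have idx_ne0: "idx \<noteq> [] \<and> hd idx = i0 \<and> last idx = r \<and> distinct idx \<and> set idx \<subseteq> {0..<K}"
    proof (cases "i0 \<le> r")
      case True
      then have "idx = i0 # [Suc i0..<Suc r]" unfolding idx_def by (simp add: upt_conv_Cons)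
      moreover have "last idx = r" "distinct idx" "set idx \<subseteq> {0..<K}" unfolding idx_def using True rK by auto
      ultimately show ?thesis by simp
    next
      case False
      then have "idx = rev (r # [Suc r..<Suc i0])" unfolding idx_def by (simp add: upt_conv_Cons)
      moreover have "[r..<Suc i0] = [r..<i0] @ [i0]" using False by simp
      moreover have "distinct idx" "set idx \<subseteq> {0..<K}" unfolding idx_def using False i0(1) by auto
      ultimately show ?thesis unfolding idx_def using False by simp
    qed
    then have idx_ne: "idx \<noteq> []" "hd idx = i0" "last idx = r" "distinct idx" "set idx \<subseteq> {0..<K}" by auto
    have seg_ne: "seg \<noteq> []" "hd seg = f i0" "last seg = f r"
      unfolding seg_def using idx_ne by (auto simp: hd_map last_map)
    have seg_dist: "distinct seg" unfolding seg_def using idx_ne(4,5) inj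
      by (simp add: distinct_map inj_on_subset)
    have seg_W: "set seg \<subseteq> W" unfolding seg_def W_def using idx_ne(5) by auto
    have seg_walk: "walkE E seg"
    proof (cases "i0 \<le> r")
      case True
      then show ?thesis unfolding seg_def idx_def using walk_planted[OF pe, of "Suc r" i0] rK by simp
    next
      case False
      have w: "walkE E (map f [r..<Suc i0])" using walk_planted[OF pe, of "Suc i0" r] i0(1) by simp
      have sege: "seg = rev (map f [r..<Suc i0])" unfolding seg_def idx_def using False by (simp add: rev_map)
      have "walkE E (rev (map f [r..<Suc i0]))" using w by (simp only: walkE_rev)
      then show ?thesis using sege by (simp only:)
    qed
    define q where "q = butlast p @ seg"
    obtain seg' where seg': "seg = f i0 # seg'" using seg_ne by (cases seg) auto
    have bp: "butlast p @ [f i0] = p" using p(1) i0(2) by (metis append_butlast_last_id)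
    have q_walk: "walkE E q"
    proof -
      have "walkE E (butlast p @ f i0 # seg') = (walkE E (butlast p @ [f i0]) \<and> walkE E (f i0 # seg'))"
        by (rule walkE_append)
      then show ?thesis unfolding q_def using seg' bp p(6) seg_walk by simp
    qed
    have q_dist: "distinct q" unfolding q_def using p(4) p(5) seg_dist seg_W
      by (auto simp: distinct_butlast)
    have sp: "set p \<subseteq> set q"
    proof -
      have "set p = set (butlast p) \<union> {f i0}" using bp by (metis set_append empty_set list.simps(15) sup_bot.right_neutral)
      then show ?thesis unfolding q_def using seg' by auto
    qed
    have WsubC: "W \<subseteq> C" unfolding W_def using WC by auto
    have bsub: "set (butlast p) \<subseteq> set p" by (meson in_set_butlastD subsetI)
    have q_C: "set q \<subseteq> C" unfolding q_def using pC seg_W WsubC bsub by auto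
    have q_ne: "q \<noteq> []" "hd q = v" "last q = f r"
      unfolding q_def using pp seg_ne by auto
    have rm1: "T r \<subseteq> T (r - 1)" using Tmono by simp
    have hq: "hd q \<in> T (r - 1)" using q_ne v rm1 by auto
    have lq: "last q \<in> T (r - 1)" using q_ne mid[of "r - 1" r] rK by simp
    have qT: "set q \<subseteq> T (r - 1)"
      unfolding T_def using path_keep_iter[OF finC q_dist q_walk q_C q_ne(1)] hq lq unfolding T_def by blast
    have p1T: "p1 \<in> T (r - 1)" using qT sp pp by auto
    have Tr: "T r = peel E (T (r - 1))"
    proof -
      have "r = Suc (r - 1)" using r1 by simp
      then have "T r = T (Suc (r - 1))" by simp
      also have "\<dots> = peel E (T (r - 1))" unfolding T_def by simp
      finally show ?thesis .
    qed
    have vp1: "{v, p1} \<in> E" using p(6) pp by simp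
    have p1v: "p1 \<noteq> v" using p(4) pp by auto
    obtain z where z: "z \<in> T (r - 1)" "z \<noteq> v" "{z, v} \<in> E" "z \<noteq> p1"
      using peel_other[where x=v and E=E and S="T (r - 1)" and y=p1] v Tr p1T p1v vp1 by (auto simp: insert_commute)
    have vT2: "v \<in> (peel E ^^ (r - 1 - 1)) C" using v Tmono[of "r - 1 - 1" r] unfolding T_def by auto
    obtain ws where ws: "length ws = r - 1" "walkE E (v # z # ws)" "nbw (v # z # ws)"
      using nb_walk_exists[where x=z and E=E and k="r - 1" and S=C and y=v] z vT2 unfolding T_def by auto
    define u where "u = rev p @ (z # ws)"
    define d where "d = length p - 1"
    define L where "L = d + r"
    have dpos: "1 \<le> d" unfolding d_def using pp by simp
    have lenp: "length p \<le> n"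
    proof -
      have "card (set p) \<le> card {0..<n}" by (rule card_mono) (use pn in auto)
      then show ?thesis using distinct_card[OF p(4)] by simp
    qed
    have dn: "d \<le> n" unfolding d_def using lenp by simp
    have ulen: "length u = Suc L" unfolding u_def L_def d_def using ws(1) pp r1 by simp
    have udef2: "u = rev (p1 # ps) @ v # (z # ws)" unfolding u_def using pp by simp
    have u_walk: "walkE E u"
    proof -
      have "walkE E (rev (p1 # ps) @ v # (z # ws)) =
            (walkE E (rev (p1 # ps) @ [v]) \<and> walkE E (v # z # ws))" by (rule walkE_append)
      moreover have eq: "rev (p1 # ps) @ [v] = rev p" using pp by simp
      moreover have "walkE E (rev p)" using p(6) by (simp only: walkE_rev)
      ultimately have "walkE E (rev (p1 # ps) @ v # (z # ws))" using ws(2) by (simp only:)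
      then show ?thesis using udef2 by (simp only:)
    qed
    have u_nb: "nbw u"
    proof -
      have "rev (p1 # ps) @ [v] = rev p" using pp by simp
      then have "nbw (rev (p1 # ps) @ [v])" using p(4) nbw_distinct by simp
      moreover have "rev (p1 # ps) \<noteq> [] \<Longrightarrow> z # ws \<noteq> [] \<Longrightarrow> last (rev (p1 # ps)) \<noteq> hd (z # ws)"
        using z(4) by simp
      ultimately have "nbw (rev (p1 # ps) @ v # (z # ws))" using nbw_append ws(3) by meson
      then show ?thesis using udef2 by (simp only:)
    qed
    have take_u: "take (Suc d) u = rev p" unfolding u_def d_def using pp by simp
    have u_dist: "distinct (take (Suc d) u)" using take_u p(4) by simp
    have u_nth: "u ! i = rev p ! i" if "i < length p" for i unfolding u_def using that by (simp add: nth_append)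
    have u_notW: "\<forall>i. 1 \<le> i \<and> i \<le> d \<longrightarrow> u ! i \<notin> W"
    proof (intro allI impI)
      fix i assume i: "1 \<le> i \<and> i \<le> d"
      have il: "i < length p" using i d_def pp by simp
      then have "u ! i = p ! (length p - Suc i)" using u_nth[OF il] rev_nth[OF il] by simp
      moreover have "length p - Suc i < length (butlast p)" using i d_def pp by simp
      ultimately have "u ! i \<in> set (butlast p)" using nth_butlast[of "length p - Suc i" p]
        nth_mem[of "length p - Suc i" "butlast p"] by simp
      then show "u ! i \<notin> W" using p(5) by blast
    qed
    have u_sub: "set u \<subseteq> {0..<n}"
    proof -
      have "set (v # z # ws) \<subseteq> {0..<n}" using walk_range[OF Eprop'(2)] ws(2) by blast
      then show ?thesis unfolding u_def using pn by auto
    qed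
    have u_hd: "hd u \<in> W" unfolding u_def using p(1,3) by (simp add: hd_rev)
    have dl: "d < length p" using d_def pp by simp
    have u_d: "u ! d = v" using u_nth[OF dl] rev_nth[OF dl] d_def p(1,2) by (simp add: hd_conv_nth)
    have dL: "d \<le> L" unfolding L_def by simp
    have "u \<in> candA n W L \<or> (\<exists>t. d < t \<and> t \<le> L \<and> take (Suc t) u \<in> candB n W t)"
      by (rule extract_struct[OF ulen dpos dL u_dist u_notW u_nb u_walk Eprop'(1) u_sub u_hd])
    then show "v \<in> badU n W r G0"
    proof
      assume uA: "u \<in> candA n W L"
      have "walkE G0 u"
      proof (rule walk_G0[OF u_walk _ EG0])
        show "\<forall>i. Suc i < length u \<longrightarrow> u ! i \<notin> W \<or> u ! Suc i \<notin> W"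
        proof (intro allI impI)
          fix i assume "Suc i < length u"
          then have "u ! Suc i \<in> set (tl u)" by (cases u) auto
          then show "u ! i \<notin> W \<or> u ! Suc i \<notin> W" using uA unfolding candA_def by blast
        qed
      qed
      then have "u \<in> {u \<in> candA n W (d + r). walkE G0 u}" using uA unfolding L_def by simp
      then have "v \<in> (\<lambda>u. u ! d) ` {u \<in> candA n W (d + r). walkE G0 u}"
        using u_d by (intro image_eqI[where x=u]) simp_all
      moreover have dmem: "d \<in> {1..n}" using dpos dn by simp
      ultimately have "v \<in> (\<Union>d\<in>{1..n}. (\<lambda>u. u ! d) ` {u \<in> candA n W (d + r). walkE G0 u})"
        by (rule UN_I[rotated])
      then show ?thesis unfolding badU_def by (rule UnI1)
    next
      assume "\<exists>t. d < t \<and> t \<le> L \<and> take (Suc t) u \<in> candB n W t"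
      then obtain t where t: "d < t" "t \<le> L" "take (Suc t) u \<in> candB n W t" by blast
      define u' where "u' = take (Suc t) u"
      have u'B: "u' \<in> candB n W t" using t u'_def by simp
      have u'len: "length u' = Suc t" using u'B unfolding candB_def by simp
      have "walkE G0 u'"
      proof (rule walk_G0[OF _ _ EG0])
        show "walkE E u'" unfolding u'_def using u_walk by (rule walkE_take)
        show "\<forall>i. Suc i < length u' \<longrightarrow> u' ! i \<notin> W \<or> u' ! Suc i \<notin> W"
        proof (intro allI impI)
          fix i assume i: "Suc i < length u'"
          have nW: "\<forall>i. 0 < i \<and> i < t \<longrightarrow> u' ! i \<notin> W" using u'B unfolding candB_def by blast
          show "u' ! i \<notin> W \<or> u' ! Suc i \<notin> W"
          proof (cases "Suc i < t")
            case True thus ?thesis using nW by blast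
          next
            case False
            then have "i = t - 1" "0 < i" using i u'len t(1) dpos by auto
            then show ?thesis using nW by simp
          qed
        qed
      qed
      moreover have "u' ! d = v" unfolding u'_def using t(1) u_d by simp
      ultimately have "v \<in> (\<lambda>u. u ! d) ` {u \<in> candB n W t. walkE G0 u}"
        using u'B by (intro image_eqI[where x=u']) simp_all
      moreover have "d \<in> {1..<t}" using t(1) dpos by auto
      ultimately have "v \<in> (\<Union>d\<in>{1..<t}. (\<lambda>u. u ! d) ` {u \<in> candB n W t. walkE G0 u})"
        by (rule UN_I[rotated])
      moreover have "t \<in> {2..n + r}" using t(1,2) dpos dn unfolding L_def by auto
      ultimately have "v \<in> (\<Union>t\<in>{2..n + r}. \<Union>d\<in>{1..<t}. (\<lambda>u. u ! d) ` {u \<in> candB n W t. walkE G0 u})"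
        by (rule UN_I[rotated])
      then show ?thesis unfolding badU_def by (rule UnI2)
    qed
  qed
  then show "(peel E ^^ r) (component n E (f 0)) - W \<subseteq> badU n W r G0"
    unfolding T_def C_def .
qed

lemma finite_all_pairs: "finite (all_pairs n)"
proof (rule finite_subset[of _ "Pow {0..<n}"])
  show "all_pairs n \<subseteq> Pow {0..<n}" unfolding all_pairs_def by auto
qed simp

lemma prob_edges:
  assumes p: "0 \<le> p" "p \<le> 1" and F: "F \<subseteq> all_pairs n"
  shows "measure_pmf.prob (erdos_renyi n p) {G. F \<subseteq> G} = p ^ card F"
proof -
  let ?A = "all_pairs n"
  let ?B = "\<lambda>e. if e \<in> F then {True} else (UNIV :: bool set)"
  have eq: "{b. F \<subseteq> {e \<in> ?A. b e}} = Pi ?A ?B"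
    using F by (auto simp: Pi_def)
  have "measure_pmf.prob (erdos_renyi n p) {G. F \<subseteq> G} =
        measure_pmf.prob (Pi_pmf ?A False (\<lambda>_. bernoulli_pmf p)) (Pi ?A ?B)"
    unfolding erdos_renyi_def by (simp add: eq)
  also have "\<dots> = (\<Prod>e\<in>?A. measure_pmf.prob (bernoulli_pmf p) (?B e))"
    by (rule measure_Pi_pmf_Pi) (rule finite_all_pairs)
  also have "\<dots> = (\<Prod>e\<in>?A. if e \<in> F then p else 1)"
    by (intro prod.cong) (auto simp: measure_pmf_single p)
  also have "\<dots> = (\<Prod>e\<in>F. p)"
    using F by (simp add: prod.If_cases finite_all_pairs Int_absorb1 Int_absorb2)
  also have "\<dots> = p ^ card F" by simp
  finally show ?thesis .
qed

definition edgesL :: "nat list \<Rightarrow> nat set set" where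
  "edgesL u = (\<lambda>i. {u ! i, u ! Suc i}) ` {i. Suc i < length u}"

lemma walkE_edges: "walkE G u \<longleftrightarrow> edgesL u \<subseteq> G"
  unfolding walkE_nth edgesL_def by auto

lemma edgesL_card:
  assumes len: "length u = Suc t" and dist: "distinct (take t u)"
    and n1: "1 \<le> t \<Longrightarrow> u ! t \<noteq> u ! (t - 1)" and n2: "2 \<le> t \<Longrightarrow> u ! t \<noteq> u ! (t - 2)"
  shows "card (edgesL u) = t"
proof -
  have set_eq: "{i. Suc i < length u} = {0..<t}" using len by auto
  have dn: "u ! i \<noteq> u ! j" if "i < t" "j < t" "i \<noteq> j" for i j
  proof -
    have "take t u ! i \<noteq> take t u ! j" using nth_eq_iff_index_eq[OF dist, of i j] that len by simp
    then show ?thesis using that by simp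
  qed
  have "inj_on (\<lambda>i. {u ! i, u ! Suc i}) {0..<t}"
  proof (rule inj_onI)
    fix i j assume i: "i \<in> {0..<t}" and j: "j \<in> {0..<t}" and e: "{u ! i, u ! Suc i} = {u ! j, u ! Suc j}"
    show "i = j"
    proof (rule ccontr)
      assume ij: "i \<noteq> j"
      {
        fix a b assume a: "a < t" "b < t" "a < b" and e': "{u ! a, u ! Suc a} = {u ! b, u ! Suc b}"
        have False
        proof (cases "Suc b < t")
          case True
          then have "u ! a = u ! b \<or> u ! a = u ! Suc b" using e' by (auto simp: doubleton_eq)
          then show False using dn a True by (metis less_SucI nat_neq_iff)
        next
          case False
          then have bt: "b = t - 1" "Suc b = t" using a by auto
          have "u ! a \<noteq> u ! b" using dn a by simp
          then have ua: "u ! a = u ! t" and ub: "u ! Suc a = u ! b"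
            using e' bt by (auto simp: doubleton_eq)
          have "Suc a = b"
          proof (rule ccontr)
            assume "Suc a \<noteq> b"
            then show False using dn[of "Suc a" b] ub a by simp
          qed
          then have "a = t - 2" using bt by simp
          then show False using n2 ua a bt by simp
        qed
      }
      note key = this
      show False
      proof (cases "i < j")
        case True thus ?thesis using key[of i j] i j e by simp
      next
        case False thus ?thesis using key[of j i] i j e ij by simp
      qed
    qed
  qed
  then show ?thesis unfolding edgesL_def set_eq by (simp add: card_image)
qed

lemma edgesL_pairs:
  assumes "set u \<subseteq> {0..<n}" "\<forall>i. Suc i < length u \<longrightarrow> u ! i \<noteq> u ! Suc i"
  shows "edgesL u \<subseteq> all_pairs n"
  unfolding edgesL_def all_pairs_def
proof clarify
  fix i assume i: "Suc i < length u"
  have "u ! i < n" "u ! Suc i < n" using assms(1) i by (auto simp: subset_iff)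
  then show "\<exists>a b. a < n \<and> b < n \<and> a \<noteq> b \<and> {u ! i, u ! Suc i} = {a, b}"
    using assms(2) i by blast
qed

lemma prob_walk:
  assumes p: "0 \<le> p" "p \<le> 1" and len: "length u = Suc t" and sub: "set u \<subseteq> {0..<n}"
    and dist: "distinct (take t u)"
    and n1: "1 \<le> t \<Longrightarrow> u ! t \<noteq> u ! (t - 1)" and n2: "2 \<le> t \<Longrightarrow> u ! t \<noteq> u ! (t - 2)"
  shows "measure_pmf.prob (erdos_renyi n p) {G. walkE G u} = p ^ t"
proof -
  have cons: "\<forall>i. Suc i < length u \<longrightarrow> u ! i \<noteq> u ! Suc i"
  proof (intro allI impI)
    fix i assume i: "Suc i < length u"
    show "u ! i \<noteq> u ! Suc i"
    proof (cases "Suc i < t")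
      case True
      then have "take t u ! i \<noteq> take t u ! Suc i" using nth_eq_iff_index_eq[OF dist, of i "Suc i"] len by simp
      then show ?thesis using True by simp
    next
      case False
      then have "Suc i = t" using i len by simp
      then show ?thesis using n1 by force
    qed
  qed
  have "{G. walkE G u} = {G. edgesL u \<subseteq> G}" by (simp add: walkE_edges)
  then show ?thesis
    using prob_edges[OF p edgesL_pairs[OF sub cons]] edgesL_card[OF len dist n1 n2] by simp
qed

lemma set_er: "set_pmf (erdos_renyi n p) \<subseteq> Pow (all_pairs n)"
  unfolding erdos_renyi_def by auto

lemma finite_set_er: "finite (set_pmf (erdos_renyi n p))"
  using set_er finite_all_pairs by (meson finite_Pow_iff finite_subset)

lemma integrable_er: "integrable (measure_pmf (erdos_renyi n p)) (f :: nat set set \<Rightarrow> real)"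
  by (rule integrable_measure_pmf_finite[OF finite_set_er])

lemma card_filter_sum: "finite A \<Longrightarrow> real (card {u \<in> A. Q u}) = (\<Sum>u\<in>A. indicator {u. Q u} u)"
proof -
  assume fA: "finite A"
  have "real (card {u \<in> A. Q u}) = (\<Sum>u\<in>{u \<in> A. Q u}. 1)" by simp
  also have "\<dots> = (\<Sum>u\<in>A. if Q u then 1 else 0)" using fA by (simp add: sum.If_cases Int_def)
  also have "\<dots> = (\<Sum>u\<in>A. indicator {u. Q u} u)" by (auto simp: indicator_def intro!: sum.cong)
  finally show ?thesis .
qed

lemma exp_card:
  assumes "finite A"
  shows "measure_pmf.expectation (erdos_renyi n p) (\<lambda>G. real (card {u \<in> A. Q G u})) =
         (\<Sum>u\<in>A. measure_pmf.prob (erdos_renyi n p) {G. Q G u})"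
proof -
  have "measure_pmf.expectation (erdos_renyi n p) (\<lambda>G. real (card {u \<in> A. Q G u})) =
        measure_pmf.expectation (erdos_renyi n p) (\<lambda>G. \<Sum>u\<in>A. indicator {G. Q G u} G)"
    using card_filter_sum[OF assms] by (simp add: indicator_def)
  also have "\<dots> = (\<Sum>u\<in>A. measure_pmf.expectation (erdos_renyi n p) (\<lambda>G. indicator {G. Q G u} G))"
    by (rule Bochner_Integration.integral_sum) (rule integrable_er)
  also have "\<dots> = (\<Sum>u\<in>A. measure_pmf.prob (erdos_renyi n p) {G. Q G u})"
    by simp
  finally show ?thesis .
qed

lemma card_candA:
  assumes "finite W"
  shows "card (candA n W L) \<le> card W * n ^ L"
proof -
  have "candA n W L \<subseteq> (\<lambda>(a, xs). a # xs) ` (W \<times> {xs. set xs \<subseteq> {0..<n} \<and> length xs = L})"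
  proof
    fix u assume "u \<in> candA n W L"
    then have u: "length u = Suc L" "set u \<subseteq> {0..<n}" "hd u \<in> W" unfolding candA_def by auto
    then obtain a xs where "u = a # xs" by (cases u) auto
    then show "u \<in> (\<lambda>(a, xs). a # xs) ` (W \<times> {xs. set xs \<subseteq> {0..<n} \<and> length xs = L})"
      using u by auto
  qed
  then have "card (candA n W L) \<le> card ((\<lambda>(a, xs). a # xs) ` (W \<times> {xs. set xs \<subseteq> {0..<n} \<and> length xs = L}))"
    by (rule card_mono[rotated]) (use assms in \<open>auto intro!: finite_imageI finite_cartesian_product finite_lists_length_eq\<close>)
  also have "\<dots> \<le> card (W \<times> {xs. set xs \<subseteq> {0..<n} \<and> length xs = L})" by (rule card_image_le) (use assms in \<open>auto intro!: finite_cartesian_product finite_lists_length_eq\<close>)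
  also have "\<dots> = card W * n ^ L" by (simp add: card_cartesian_product card_lists_length_eq)
  finally show ?thesis .
qed

lemma card_candB:
  assumes "finite W" "1 \<le> t"
  shows "card (candB n W t) \<le> card W * n ^ (t - 1) * (card W + t)"
proof -
  let ?I = "W \<times> {xs. set xs \<subseteq> {0..<n} \<and> length xs = t - 1}"
  let ?F = "\<lambda>(a, xs). (\<lambda>b. a # xs @ [b]) ` (W \<union> set (a # xs))"
  have finI: "finite ?I" using assms(1) by (auto intro!: finite_cartesian_product finite_lists_length_eq)
  have "candB n W t \<subseteq> (\<Union>ax\<in>?I. ?F ax)"
  proof
    fix u assume "u \<in> candB n W t"
    then have u: "length u = Suc t" "set u \<subseteq> {0..<n}" "hd u \<in> W" "u ! t \<in> W \<or> u ! t \<in> set (take t u)"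
      unfolding candB_def by auto
    have e1: "u = take t u @ [u ! t]" using u(1) by (metis lessI take_Suc_conv_app_nth take_all order_refl)
    have e2: "take t u = hd u # take (t - 1) (tl u)" using u(1) assms(2)
      by (cases u; cases t) auto
    have "set (take (t - 1) (tl u)) \<subseteq> set u" by (cases u) (auto dest: in_set_takeD)
    then have "(hd u, take (t - 1) (tl u)) \<in> ?I" using u(1-3) assms(2) by auto
    moreover have "u \<in> ?F (hd u, take (t - 1) (tl u))"
    proof -
      have "u ! t \<in> W \<union> set (hd u # take (t - 1) (tl u))" using u(4) e2 by auto
      moreover have "u = hd u # take (t - 1) (tl u) @ [u ! t]" using e1 e2 by simp
      ultimately show ?thesis by auto
    qed
    ultimately show "u \<in> (\<Union>ax\<in>?I. ?F ax)" by blast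
  qed
  then have "card (candB n W t) \<le> card (\<Union>ax\<in>?I. ?F ax)"
    by (rule card_mono[rotated]) (use finI assms(1) in auto)
  also have "\<dots> \<le> (\<Sum>ax\<in>?I. card (?F ax))" by (rule card_UN_le[OF finI])
  also have "\<dots> \<le> (\<Sum>ax\<in>?I. card W + t)"
  proof (rule sum_mono)
    fix ax assume ax: "ax \<in> ?I"
    obtain a xs where axe: "ax = (a, xs)" by (cases ax)
    have "card (?F ax) \<le> card (W \<union> set (a # xs))" unfolding axe prod.case
      by (rule card_image_le) (use assms(1) in simp)
    also have "\<dots> \<le> card W + card (set (a # xs))" by (rule card_Un_le)
    also have "\<dots> \<le> card W + length (a # xs)" using card_length by (metis add_le_mono1 add_mono_thms_linordered_semiring(1) le_refl)
    also have "\<dots> = card W + t" using ax axe assms(2) by simp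
    finally show "card (?F ax) \<le> card W + t" .
  qed
  also have "\<dots> = card W * n ^ (t - 1) * (card W + t)"
    by (simp add: card_cartesian_product card_lists_length_eq)
  finally show ?thesis .
qed

lemma EA:
  assumes fW: "finite W" and lam: "0 < lam" "lam < 1" and n: "0 < n" and p_def: "p = lam / real n"
  shows "measure_pmf.expectation (erdos_renyi n p) (\<lambda>G. real (card {u \<in> candA n W L. walkE G u}))
          \<le> real (card W) * lam ^ L"
proof -
  have n1: "1 \<le> real n" using n by simp
  have p: "0 \<le> p" "p \<le> 1" unfolding p_def using lam n1 by (auto simp: divide_le_eq)
  have "measure_pmf.expectation (erdos_renyi n p) (\<lambda>G. real (card {u \<in> candA n W L. walkE G u}))
        = (\<Sum>u\<in>candA n W L. measure_pmf.prob (erdos_renyi n p) {G. walkE G u})"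
    by (rule exp_card[OF finite_candA])
  also have "\<dots> = (\<Sum>u\<in>candA n W L. p ^ L)"
  proof (rule sum.cong[OF refl])
    fix u assume "u \<in> candA n W L"
    then have u: "length u = Suc L" "set u \<subseteq> {0..<n}" "distinct u" unfolding candA_def by auto
    have d: "distinct (take L u)" using u(3) by simp
    have n1: "u ! L \<noteq> u ! (L - 1)" if "1 \<le> L" using u(1,3) that by (simp add: nth_eq_iff_index_eq)
    have n2: "u ! L \<noteq> u ! (L - 2)" if "2 \<le> L" using u(1,3) that by (simp add: nth_eq_iff_index_eq)
    show "measure_pmf.prob (erdos_renyi n p) {G. walkE G u} = p ^ L"
      by (rule prob_walk[OF p u(1,2) d n1 n2])
  qed
  also have "\<dots> = real (card (candA n W L)) * p ^ L" by simp
  also have "\<dots> \<le> real (card W * n ^ L) * p ^ L"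
  proof -
    have c: "real (card (candA n W L)) \<le> real (card W * n ^ L)"
      using card_candA[OF fW, of n L] by (simp only: of_nat_le_iff)
    show ?thesis using mult_right_mono[OF c zero_le_power[OF p(1)]] .
  qed
  also have "\<dots> = real (card W) * (real n * p) ^ L" by (simp add: power_mult_distrib)
  also have "real n * p = lam" using n p_def by simp
  finally show ?thesis .
qed

lemma EB:
  assumes fW: "finite W" and lam: "0 < lam" "lam < 1" and n: "0 < n" and p_def: "p = lam / real n"
    and t: "2 \<le> t"
  shows "measure_pmf.expectation (erdos_renyi n p) (\<lambda>G. real (card {u \<in> candB n W t. walkE G u}))
          \<le> real (card W) * (real (card W) + real t) * lam ^ t / real n"
proof -
  have n1: "1 \<le> real n" using n by simp
  have p: "0 \<le> p" "p \<le> 1" unfolding p_def using lam n1 by (auto simp: divide_le_eq)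
  have "measure_pmf.expectation (erdos_renyi n p) (\<lambda>G. real (card {u \<in> candB n W t. walkE G u}))
        = (\<Sum>u\<in>candB n W t. measure_pmf.prob (erdos_renyi n p) {G. walkE G u})"
    by (rule exp_card[OF finite_candB])
  also have "\<dots> = (\<Sum>u\<in>candB n W t. p ^ t)"
  proof (rule sum.cong[OF refl])
    fix u assume "u \<in> candB n W t"
    then have u: "length u = Suc t" "set u \<subseteq> {0..<n}" "distinct (take t u)"
      "u ! t \<noteq> u ! (t - 1)" "u ! t \<noteq> u ! (t - 2)" unfolding candB_def by auto
    show "measure_pmf.prob (erdos_renyi n p) {G. walkE G u} = p ^ t"
      by (rule prob_walk[OF p u(1,2,3)]) (use u in auto)
  qed
  also have "\<dots> = real (card (candB n W t)) * p ^ t" by simp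
  also have "\<dots> \<le> real (card W * n ^ (t - 1) * (card W + t)) * p ^ t"
  proof -
    have c: "real (card (candB n W t)) \<le> real (card W * n ^ (t - 1) * (card W + t))"
      using card_candB[OF fW, of t n] t by (simp only: of_nat_le_iff)
    show ?thesis using mult_right_mono[OF c zero_le_power[OF p(1)]] .
  qed
  also have "\<dots> = real (card W) * (real (card W) + real t) * (real n ^ (t - 1) * p ^ t)" by simp
  also have "real n ^ (t - 1) * p ^ t = lam ^ t / real n"
  proof -
    have "t = Suc (t - 1)" using t by simp
    then have "real n ^ (t - 1) * p ^ t = real n ^ (t - 1) * p ^ (t - 1) * p"
      by (metis mult.assoc power_Suc2)
    also have "\<dots> = (real n * p) ^ (t - 1) * p" by (simp add: power_mult_distrib)
    also have "\<dots> = lam ^ (t - 1) * lam / real n" using n p_def by simp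
    also have "\<dots> = lam ^ t / real n" using \<open>t = Suc (t - 1)\<close> by (metis power_Suc2)
    finally show ?thesis .
  qed
  finally show ?thesis by simp
qed

lemma exp_badcount:
  assumes fW: "finite W" and cW: "card W = K" and lam: "0 < lam" "lam < 1" and n: "0 < n"
    and p_def: "p = lam / real n"
  shows "measure_pmf.expectation (erdos_renyi n p) (\<lambda>G. real (badcount n W r G))
     \<le> (\<Sum>d=1..n. real K * lam ^ (d + r)) +
        (\<Sum>t=2..n + r. real (t - 1) * (real K * (real K + real t) * lam ^ t / real n))"
proof -
  let ?M = "erdos_renyi n p"
  let ?a = "\<lambda>d G. real (card {u \<in> candA n W (d + r). walkE G u})"
  let ?b = "\<lambda>t G. real (t - 1) * real (card {u \<in> candB n W t. walkE G u})"
  have eq: "(\<lambda>G. real (badcount n W r G)) = (\<lambda>G. (\<Sum>d=1..n. ?a d G) + (\<Sum>t=2..n + r. ?b t G))"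
    unfolding badcount_def by (simp add: of_nat_sum)
  have "measure_pmf.expectation ?M (\<lambda>G. real (badcount n W r G)) =
        measure_pmf.expectation ?M (\<lambda>G. \<Sum>d=1..n. ?a d G) + measure_pmf.expectation ?M (\<lambda>G. \<Sum>t=2..n + r. ?b t G)"
    unfolding eq by (rule Bochner_Integration.integral_add) (rule integrable_er)+
  also have "measure_pmf.expectation ?M (\<lambda>G. \<Sum>d=1..n. ?a d G) = (\<Sum>d=1..n. measure_pmf.expectation ?M (?a d))"
    by (rule Bochner_Integration.integral_sum) (rule integrable_er)
  also have "measure_pmf.expectation ?M (\<lambda>G. \<Sum>t=2..n + r. ?b t G) = (\<Sum>t=2..n + r. measure_pmf.expectation ?M (?b t))"
    by (rule Bochner_Integration.integral_sum) (rule integrable_er)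
  also have "(\<Sum>d=1..n. measure_pmf.expectation ?M (?a d)) \<le> (\<Sum>d=1..n. real K * lam ^ (d + r))"
    by (rule sum_mono) (use EA[OF fW lam n p_def] cW in auto)
  also have "(\<Sum>t=2..n + r. measure_pmf.expectation ?M (?b t)) \<le>
        (\<Sum>t=2..n + r. real (t - 1) * (real K * (real K + real t) * lam ^ t / real n))"
  proof (rule sum_mono)
    fix t assume t: "t \<in> {2..n + r}"
    have "measure_pmf.expectation ?M (?b t) = real (t - 1) * measure_pmf.expectation ?M
            (\<lambda>G. real (card {u \<in> candB n W t. walkE G u}))"
      by (rule Bochner_Integration.integral_mult_right_zero)
    also have "\<dots> \<le> real (t - 1) * (real K * (real K + real t) * lam ^ t / real n)"
      by (intro mult_left_mono) (use EB[OF fW lam n p_def, of t] t cW in auto)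
    finally show "measure_pmf.expectation ?M (?b t) \<le> real (t - 1) * (real K * (real K + real t) * lam ^ t / real n)" .
  qed
  finally show ?thesis by simp
qed

definition B1 :: "nat \<Rightarrow> nat \<Rightarrow> nat set set \<Rightarrow> bool" where
  "B1 n K G \<longleftrightarrow> (\<exists>u. length u = K \<and> distinct u \<and> set u \<subseteq> {0..<n} \<and> walkE G u)"

lemma prob_B1:
  assumes lam: "0 < lam" "lam < 1" and n: "0 < n" and p_def: "p = lam / real n" and K: "1 \<le> K"
  shows "measure_pmf.prob (erdos_renyi n p) {G. B1 n K G} \<le> real n * lam ^ (K - 1)"
proof -
  have n1: "1 \<le> real n" using n by simp
  have p: "0 \<le> p" "p \<le> 1" unfolding p_def using lam n1 by (auto simp: divide_le_eq)
  define DL where "DL = {u. length u = K \<and> distinct u \<and> set u \<subseteq> {0..<n}}"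
  have finDL: "finite DL"
    by (rule finite_subset[OF _ finite_lists_n[of K n]]) (auto simp: DL_def)
  have "{G. B1 n K G} = (\<Union>u\<in>DL. {G. walkE G u})" unfolding B1_def DL_def by auto
  then have "measure_pmf.prob (erdos_renyi n p) {G. B1 n K G} \<le>
      (\<Sum>u\<in>DL. measure_pmf.prob (erdos_renyi n p) {G. walkE G u})"
    using measure_pmf.finite_measure_subadditive_finite[OF finDL, of "\<lambda>u. {G. walkE G u}" "erdos_renyi n p"]
    by simp
  also have "\<dots> = (\<Sum>u\<in>DL. p ^ (K - 1))"
  proof (rule sum.cong[OF refl])
    fix u assume "u \<in> DL"
    then have u: "length u = Suc (K - 1)" "set u \<subseteq> {0..<n}" "distinct u" unfolding DL_def using K by auto
    have d: "distinct (take (K - 1) u)" using u(3) by simp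
    have n1: "u ! (K - 1) \<noteq> u ! (K - 1 - 1)" if "1 \<le> K - 1" using u(1,3) that by (simp add: nth_eq_iff_index_eq)
    have n2: "u ! (K - 1) \<noteq> u ! (K - 1 - 2)" if "2 \<le> K - 1" using u(1,3) that by (simp add: nth_eq_iff_index_eq)
    show "measure_pmf.prob (erdos_renyi n p) {G. walkE G u} = p ^ (K - 1)"
      by (rule prob_walk[OF p u(1,2) d n1 n2])
  qed
  also have "\<dots> = real (card DL) * p ^ (K - 1)" by simp
  also have "\<dots> \<le> real (n ^ K) * p ^ (K - 1)"
  proof -
    have "card DL \<le> card {u :: nat list. set u \<subseteq> {0..<n} \<and> length u = K}"
      by (rule card_mono) (auto simp: DL_def intro: finite_lists_length_eq)
    then have c: "real (card DL) \<le> real (n ^ K)" by (simp add: card_lists_length_eq)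
    show ?thesis using mult_right_mono[OF c zero_le_power[OF p(1)]] .
  qed
  also have "\<dots> = real n * (real n * p) ^ (K - 1)"
  proof -
    have "K = Suc (K - 1)" using K by simp
    then have "real (n ^ K) = real n * real n ^ (K - 1)" by (metis of_nat_power power_Suc)
    then show ?thesis by (simp add: power_mult_distrib)
  qed
  also have "real n * p = lam" using n p_def by simp
  finally show ?thesis .
qed

lemma LP:
  fixes f :: "nat \<Rightarrow> nat" and G0 :: "nat set set"
  assumes inj: "inj_on f {0..<K}" and rng: "f ` {0..<K} \<subseteq> {0..<n}" and G: "G0 \<subseteq> all_pairs n"
    and K: "1 \<le> K" and nB: "\<not> B1 n K G0"
    and lp: "is_longest_path n (G0 \<union> path_edges K f) xs"
  shows "hd xs \<in> component n (G0 \<union> path_edges K f) (f 0)"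
proof (rule ccontr)
  define E where "E = G0 \<union> path_edges K f"
  define C where "C = component n E (f 0)"
  assume nC: "hd xs \<notin> component n (G0 \<union> path_edges K f) (f 0)"
  then have nC': "hd xs \<notin> C" unfolding C_def E_def .
  have frng: "f i < n" if "i < K" for i using rng that by (auto simp: image_subset_iff)
  have pe: "\<forall>i. Suc i < K \<longrightarrow> {f i, f (Suc i)} \<in> E"
    unfolding E_def path_edges_def by blast
  have f0: "f 0 < n" using frng K by auto
  have WC: "\<forall>i<K. f i \<in> C"
  proof (intro allI impI)
    fix i assume "i < K"
    then show "f i \<in> C"
    proof (induction i)
      case 0 thus ?case unfolding C_def using comp_self[OF f0] by simp
    next
      case (Suc i)
      then have "f i \<in> C" by simp
      moreover have "{f i, f (Suc i)} \<in> E" using pe Suc.prems by blast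
      moreover have "f (Suc i) < n" using frng Suc.prems by auto
      ultimately show ?case unfolding C_def using comp_step by blast
    qed
  qed
  have ECG: "\<forall>a b. {a, b} \<in> E \<longrightarrow> a \<notin> C \<longrightarrow> {a, b} \<in> G0"
  proof (intro allI impI)
    fix a b assume ab: "{a, b} \<in> E" "a \<notin> C"
    show "{a, b} \<in> G0"
    proof (rule ccontr)
      assume "{a, b} \<notin> G0"
      then obtain i where i: "Suc i < K" "{a, b} = {f i, f (Suc i)}"
        using ab unfolding E_def path_edges_def by blast
      then have "a = f i \<or> a = f (Suc i)" by (auto simp: doubleton_eq)
      then have "a \<in> C" using WC i(1) by auto
      then show False using ab by simp
    qed
  qed
  have xs: "xs \<noteq> []" "distinct xs" "set xs \<subseteq> {0..<n}" "walkE E xs"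
    and longest: "\<And>ys. is_path n E ys \<Longrightarrow> length ys \<le> length xs"
    using lp unfolding is_longest_path_def is_path_def E_def walkE_nth by auto
  have "is_path n E (map f [0..<K])"
    unfolding is_path_def
  proof (intro conjI allI impI)
    show "map f [0..<K] \<noteq> []" using K by simp
    show "distinct (map f [0..<K])" using inj by (simp add: distinct_map)
    show "set (map f [0..<K]) \<subseteq> {0..<n}" using frng by auto
    fix i assume "Suc i < length (map f [0..<K])"
    then show "{map f [0..<K] ! i, map f [0..<K] ! Suc i} \<in> E" using pe by simp
  qed
  then have lenK: "K \<le> length xs" using longest by fastforce
  have allnC: "xs ! i \<notin> C" if "i < length xs" for i
    using that
  proof (induction i)
    case 0 thus ?case using nC' xs(1) by (simp add: hd_conv_nth)
  next
    case (Suc i)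
    show ?case
    proof
      assume inC: "xs ! Suc i \<in> C"
      have "{xs ! i, xs ! Suc i} \<in> E" using xs(4) Suc.prems unfolding walkE_nth by blast
      then have "{xs ! Suc i, xs ! i} \<in> E" by (simp add: insert_commute)
      moreover have "xs ! i < n"
      proof -
        have "xs ! i \<in> set xs" using Suc.prems by simp
        then show ?thesis using xs(3) by auto
      qed
      ultimately have "xs ! i \<in> C" using inC comp_step unfolding C_def by blast
      then show False using Suc.IH Suc.prems by simp
    qed
  qed
  have "walkE G0 xs"
  proof (rule walk_G0[OF xs(4) _ ECG])
    show "\<forall>i. Suc i < length xs \<longrightarrow> xs ! i \<notin> C \<or> xs ! Suc i \<notin> C" using allnC by auto
  qed
  then have "walkE G0 (take K xs)" by (rule walkE_take)
  moreover have "length (take K xs) = K" using lenK by simp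
  moreover have "distinct (take K xs)" using xs(2) by simp
  moreover have "set (take K xs) \<subseteq> {0..<n}" using xs(3) by (meson in_set_takeD subset_iff)
  ultimately have "B1 n K G0" unfolding B1_def by blast
  then show False using nB by simp
qed

lemma finite_badU: "finite (badU n W r G)"
  unfolding badU_def by (auto intro!: finite_imageI simp: finite_candA finite_candB)

definition goodP :: "nat \<Rightarrow> nat \<Rightarrow> nat \<Rightarrow> real \<Rightarrow> nat set set \<Rightarrow> nat set \<Rightarrow> bool" where
  "goodP n K r eps E W \<longleftrightarrow> (\<forall>xs. is_longest_path n E xs \<longrightarrow>
     (let C' = (peel E ^^ r) (component n E (hd xs))
      in \<bar>real (card C') - real K\<bar> \<le> eps * real K \<and>
         \<bar>real (card (C' \<inter> W)) - real K\<bar> \<le> eps * real K))"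

lemma good_core:
  fixes f :: "nat \<Rightarrow> nat" and G0 :: "nat set set"
  assumes inj: "inj_on f {0..<K}" and rng: "f ` {0..<K} \<subseteq> {0..<n}" and G: "G0 \<subseteq> all_pairs n"
    and r1: "1 \<le> r" and rK: "2 * r < K" and reps: "2 * real r \<le> eps * real K"
    and nB: "\<not> B1 n K G0" and bc: "real (badcount n (f ` {0..<K}) r G0) < eps * real K"
    and lp: "is_longest_path n (G0 \<union> path_edges K f) xs"
  shows "\<bar>real (card ((peel (G0 \<union> path_edges K f) ^^ r) (component n (G0 \<union> path_edges K f) (hd xs)))) - real K\<bar> \<le> eps * real K \<and>
         \<bar>real (card ((peel (G0 \<union> path_edges K f) ^^ r) (component n (G0 \<union> path_edges K f) (hd xs)) \<inter> f ` {0..<K})) - real K\<bar> \<le> eps * real K"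
proof -
  define E where "E = G0 \<union> path_edges K f"
  define W where "W = f ` {0..<K}"
  define C where "C = component n E (f 0)"
  have K1: "1 \<le> K" using rK by simp
  have "hd xs \<in> C" using LP[OF inj rng G K1 nB lp] unfolding C_def E_def .
  then have ceq: "component n E (hd xs) = C" unfolding C_def by (rule comp_eq)
  define C' where "C' = (peel E ^^ r) C"
  have D1: "C' - W \<subseteq> badU n W r G0" unfolding C'_def C_def E_def W_def
    by (rule det_main(1)[OF inj rng G r1 rK])
  have D2: "K - 2 * r \<le> card (C' \<inter> W)" unfolding C'_def C_def E_def W_def
    by (rule det_main(2)[OF inj rng G r1 rK])
  have finC': "finite C'"
  proof -
    have "C' \<subseteq> C" unfolding C'_def by (rule peel_iter_subset)
    moreover have "C \<subseteq> {0..<n}" unfolding C_def component_def by auto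
    ultimately have "C' \<subseteq> {0..<n}" by (rule order_trans)
    then show ?thesis by (rule finite_subset) simp
  qed
  have cd: "card (C' - W) \<le> badcount n W r G0"
    using card_mono[OF finite_badU D1] card_badU[of n W r G0] by linarith
  have cW: "card W = K" unfolding W_def using inj by (simp add: card_image)
  have cw: "card (C' \<inter> W) \<le> K"
  proof -
    have "card (C' \<inter> W) \<le> card W" by (rule card_mono) (auto simp: W_def)
    then show ?thesis using cW by simp
  qed
  have split: "card C' = card (C' \<inter> W) + card (C' - W)" using card_Int_Diff[OF finC'] .
  have r1': "real (K - 2 * r) = real K - 2 * real r" using rK by (simp add: of_nat_diff)
  have A: "real K - 2 * real r \<le> real (card (C' \<inter> W))" using D2 r1' by (metis of_nat_le_iff)
  have B: "real (card (C' \<inter> W)) \<le> real K" using cw by simp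
  have Cc: "real (card (C' - W)) < eps * real K" using cd bc unfolding W_def
    by (meson le_less_trans of_nat_le_iff)
  have Sp: "real (card C') = real (card (C' \<inter> W)) + real (card (C' - W))" using split by simp
  have g1: "\<bar>real (card C') - real K\<bar> \<le> eps * real K" using A B Cc Sp reps by linarith
  have g2: "\<bar>real (card (C' \<inter> W)) - real K\<bar> \<le> eps * real K" using A B reps by linarith
  have eqC': "(peel (G0 \<union> path_edges K f) ^^ r) (component n (G0 \<union> path_edges K f) (hd xs)) = C'"
    unfolding C'_def using ceq unfolding E_def by simp
  show ?thesis unfolding eqC' W_def[symmetric] using g1 g2 by (rule conjI)
qed

lemma good_det:
  fixes f :: "nat \<Rightarrow> nat" and G0 :: "nat set set"
  assumes inj: "inj_on f {0..<K}" and rng: "f ` {0..<K} \<subseteq> {0..<n}" and G: "G0 \<subseteq> all_pairs n"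
    and r1: "1 \<le> r" and rK: "2 * r < K" and reps: "2 * real r \<le> eps * real K"
    and nB: "\<not> B1 n K G0" and bc: "real (badcount n (f ` {0..<K}) r G0) < eps * real K"
  shows "goodP n K r eps (G0 \<union> path_edges K f) (f ` {0..<K})"
  unfolding goodP_def Let_def
  using good_core[OF inj rng G r1 rK reps nB bc] by blast

lemma per_f:
  fixes f :: "nat \<Rightarrow> nat"
  assumes inj: "inj_on f {0..<K}" and rng: "f ` {0..<K} \<subseteq> {0..<n}"
    and lam: "0 < lam" "lam < 1" and n: "0 < n"
    and r1: "1 \<le> r" and rK: "2 * r < K" and eps: "0 < eps" and reps: "2 * real r \<le> eps * real K"
  shows "measure_pmf.prob (erdos_renyi n (lam / real n))
           {G0. \<not> goodP n K r eps (G0 \<union> path_edges K f) (f ` {0..<K})}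
     \<le> real n * lam ^ (K - 1) +
        ((\<Sum>d=1..n. real K * lam ^ (d + r)) +
         (\<Sum>t=2..n + r. real (t - 1) * (real K * (real K + real t) * lam ^ t / real n))) / (eps * real K)"
proof -
  define M where "M = erdos_renyi n (lam / real n)"
  define W where "W = f ` {0..<K}"
  define Bad where "Bad = {G0. \<not> goodP n K r eps (G0 \<union> path_edges K f) W}"
  define S1 where "S1 = {G. B1 n K G}"
  define S2 where "S2 = {G. eps * real K \<le> real (badcount n W r G)}"
  have K1: "1 \<le> K" using rK by simp
  have epsK: "0 < eps * real K" using eps K1 by simp
  have sub: "Bad \<inter> set_pmf M \<subseteq> S1 \<union> S2"
  proof
    fix G0 assume G0: "G0 \<in> Bad \<inter> set_pmf M"
    have G: "G0 \<subseteq> all_pairs n" using G0 set_er unfolding M_def by blast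
    show "G0 \<in> S1 \<union> S2"
    proof (rule ccontr)
      assume "G0 \<notin> S1 \<union> S2"
      then have "\<not> B1 n K G0" "real (badcount n W r G0) < eps * real K" unfolding S1_def S2_def by auto
      then have "goodP n K r eps (G0 \<union> path_edges K f) W"
        unfolding W_def using good_det[OF inj rng G r1 rK reps] by blast
      then show False using G0 unfolding Bad_def by simp
    qed
  qed
  have "measure_pmf.prob M Bad = measure_pmf.prob M (Bad \<inter> set_pmf M)"
    by (simp add: measure_Int_set_pmf)
  also have "\<dots> \<le> measure_pmf.prob M (S1 \<union> S2)"
    by (rule measure_pmf.finite_measure_mono[OF sub]) simp
  also have "\<dots> \<le> measure_pmf.prob M S1 + measure_pmf.prob M S2"
    by (rule measure_subadditive) (simp_all add: measure_pmf.emeasure_eq_measure)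
  also have "measure_pmf.prob M S1 \<le> real n * lam ^ (K - 1)"
    unfolding M_def S1_def by (rule prob_B1[OF lam n refl K1])
  also have "measure_pmf.prob M S2 \<le>
      ((\<Sum>d=1..n. real K * lam ^ (d + r)) +
         (\<Sum>t=2..n + r. real (t - 1) * (real K * (real K + real t) * lam ^ t / real n))) / (eps * real K)"
  proof -
    have "measure_pmf.prob M S2 = measure M {G \<in> space M. eps * real K \<le> real (badcount n W r G)}"
      unfolding S2_def by simp
    also have "\<dots> \<le> measure_pmf.expectation M (\<lambda>G. real (badcount n W r G)) / (eps * real K)"
      by (rule integral_Markov_inequality_measure[OF _ _ _ epsK]) (auto simp: M_def integrable_er)
    also have "\<dots> \<le> ((\<Sum>d=1..n. real K * lam ^ (d + r)) +
         (\<Sum>t=2..n + r. real (t - 1) * (real K * (real K + real t) * lam ^ t / real n))) / (eps * real K)"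
    proof (rule divide_right_mono)
      have cW: "card W = K" unfolding W_def using inj by (simp add: card_image)
      show "measure_pmf.expectation M (\<lambda>G. real (badcount n W r G)) \<le>
        (\<Sum>d=1..n. real K * lam ^ (d + r)) +
         (\<Sum>t=2..n + r. real (t - 1) * (real K * (real K + real t) * lam ^ t / real n))"
        unfolding M_def by (rule exp_badcount[OF _ cW lam n refl]) (simp add: W_def)
    qed (use epsK in simp)
    finally show ?thesis .
  qed
  finally show ?thesis unfolding M_def Bad_def W_def by simp
qed

lemma pair_bound:
  assumes "\<And>b. b \<in> set_pmf B \<Longrightarrow> measure_pmf.prob A {a. \<not> P a b} \<le> \<delta>"
  shows "measure_pmf.prob (pair_pmf A B) {(a, b). P a b} \<ge> 1 - \<delta>"
proof -
  have "emeasure (pair_pmf A B) {(a, b). \<not> P a b} = emeasure (pair_pmf B A) {(b, a). \<not> P a b}"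
    by (subst pair_commute_pmf) (simp add: vimage_def case_prod_unfold)
  also have "\<dots> = (\<integral>\<^sup>+ b. \<integral>\<^sup>+ a. indicator {(b, a). \<not> P a b} (b, a) \<partial>A \<partial>B)"
    by (subst nn_integral_indicator[symmetric]) (simp_all add: nn_integral_pair_pmf')
  also have "\<dots> = (\<integral>\<^sup>+ b. emeasure A {a. \<not> P a b} \<partial>B)"
    by (intro nn_integral_cong) (simp add: nn_integral_indicator[symmetric] indicator_def)
  also have "\<dots> \<le> (\<integral>\<^sup>+ b. ennreal \<delta> \<partial>B)"
  proof (rule nn_integral_mono_AE)
    show "AE b in measure_pmf B. emeasure A {a. \<not> P a b} \<le> ennreal \<delta>"
      using assms by (auto simp: AE_measure_pmf_iff measure_pmf.emeasure_eq_measure intro!: ennreal_leI)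
  qed
  also have "\<dots> = ennreal \<delta>" by (simp add: measure_pmf.emeasure_space_1)
  finally have "emeasure (pair_pmf A B) {(a, b). \<not> P a b} \<le> ennreal \<delta>" .
  moreover have d0: "0 \<le> \<delta>"
  proof -
    obtain b where "b \<in> set_pmf B" using set_pmf_not_empty[of B] by blast
    then show ?thesis using assms[of b] measure_nonneg[of "measure_pmf A"] by (meson order_trans)
  qed
  ultimately have "measure_pmf.prob (pair_pmf A B) {(a, b). \<not> P a b} \<le> \<delta>"
    by (simp add: measure_pmf.emeasure_eq_measure)
  moreover have "measure_pmf.prob (pair_pmf A B) {(a, b). \<not> P a b} = 1 - measure_pmf.prob (pair_pmf A B) {(a, b). P a b}"
  proof -
    have "{(a, b). \<not> P a b} = space (measure_pmf (pair_pmf A B)) - {(a, b). P a b}" by auto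
    then show ?thesis using measure_pmf.prob_compl[of "{(a, b). P a b}" "pair_pmf A B"] by simp
  qed
  ultimately show ?thesis by simp
qed

lemma summable_S:
  fixes x :: real assumes "0 \<le> x" "x < 1"
  shows "summable (\<lambda>t. real (Suc t) * real (Suc (Suc t)) * x ^ t)"
proof -
  have s1: "summable (\<lambda>n. diffs (\<lambda>_. 1::real) n * y ^ n)" if "norm y < 1" for y :: real
    by (rule termdiff_converges[OF that]) (simp add: summable_geometric)
  have s1': "summable (\<lambda>n. real (Suc n) * y ^ n)" if "norm y < 1" for y :: real
    using s1[OF that] by (simp add: diffs_def)
  have "summable (\<lambda>n. diffs (\<lambda>n. real (Suc n)) n * x ^ n)"
    by (rule termdiff_converges[of x 1]) (use assms s1' in auto)
  then show ?thesis by (simp add: diffs_def mult.assoc)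
qed

lemma set_RI:
  assumes "K \<le> n"
  shows "set_pmf (random_injection n K) = {f. f \<in> {0..<K} \<rightarrow>\<^sub>E {0..<n} \<and> inj_on f {0..<K}}"
proof -
  have fin: "finite {f. f \<in> {0..<K} \<rightarrow>\<^sub>E {0..<n} \<and> inj_on f {0..<K}}"
    by (rule finite_subset[of _ "{0..<K} \<rightarrow>\<^sub>E {0..<n}"]) (auto intro: finite_PiE)
  have "restrict id {0..<K} \<in> {f. f \<in> {0..<K} \<rightarrow>\<^sub>E {0..<n} \<and> inj_on f {0..<K}}"
    using assms by (auto simp: inj_on_def)
  then have ne: "{f. f \<in> {0..<K} \<rightarrow>\<^sub>E {0..<n} \<and> inj_on f {0..<K}} \<noteq> {}" by blast
  show ?thesis unfolding random_injection_def using fin ne by simp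
qed

lemma bound_simp:
  fixes lam eps :: real
  assumes lam: "0 < lam" "lam < 1" and n: "0 < n" and K: "1 \<le> K" and eps: "0 < eps"
  defines "S \<equiv> suminf (\<lambda>t. real (Suc t) * real (Suc (Suc t)) * lam ^ t)"
  shows "((\<Sum>d=1..n. real K * lam ^ (d + r)) +
         (\<Sum>t=2..n + r. real (t - 1) * (real K * (real K + real t) * lam ^ t / real n))) / (eps * real K)
       \<le> lam ^ r / ((1 - lam) * eps) + (real K + 1) * S / (eps * real n)"
proof -
  let ?g = "\<lambda>t. real (Suc t) * real (Suc (Suc t)) * lam ^ t"
  have sg: "summable ?g" using summable_S[of lam] lam by simp
  have gnn: "0 \<le> ?g t" for t using lam by simp
  have T1a: "(\<Sum>d=1..n. lam ^ d) \<le> 1 / (1 - lam)"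
  proof -
    have "(\<Sum>d=1..n. lam ^ d) \<le> suminf (\<lambda>d. lam ^ d)"
      by (rule sum_le_suminf) (use lam in \<open>auto intro: summable_geometric\<close>)
    also have "\<dots> = 1 / (1 - lam)" using suminf_geometric[of lam] lam by simp
    finally show ?thesis .
  qed
  have T1: "(\<Sum>d=1..n. real K * lam ^ (d + r)) \<le> real K * lam ^ r / (1 - lam)"
  proof -
    have "(\<Sum>d=1..n. real K * lam ^ (d + r)) = real K * lam ^ r * (\<Sum>d=1..n. lam ^ d)"
      by (simp add: sum_distrib_left power_add mult_ac)
    also have "\<dots> \<le> real K * lam ^ r * (1 / (1 - lam))"
      by (rule mult_left_mono[OF T1a]) (use lam in simp)
    finally show ?thesis by simp
  qed
  have T2: "(\<Sum>t=2..n + r. real (t - 1) * (real K * (real K + real t) * lam ^ t / real n))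
            \<le> real K * (real K + 1) / real n * S"
  proof -
    have "(\<Sum>t=2..n + r. real (t - 1) * (real K * (real K + real t) * lam ^ t / real n))
          \<le> (\<Sum>t=2..n + r. real K * (real K + 1) / real n * ?g t)"
    proof (rule sum_mono)
      fix t assume "t \<in> {2..n + r}"
      have a: "real (t - 1) \<le> real (Suc t)" by simp
      have b: "real K + real t \<le> (real K + 1) * real (Suc (Suc t))" using K by (simp add: algebra_simps)
      have "real (t - 1) * (real K + real t) \<le> real (Suc t) * ((real K + 1) * real (Suc (Suc t)))"
        by (rule mult_mono[OF a b]) auto
      then have "real (t - 1) * (real K + real t) * (real K * lam ^ t / real n) \<le>
                 real (Suc t) * ((real K + 1) * real (Suc (Suc t))) * (real K * lam ^ t / real n)"
        by (rule mult_right_mono) (use lam in simp)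
      then show "real (t - 1) * (real K * (real K + real t) * lam ^ t / real n) \<le> real K * (real K + 1) / real n * ?g t"
        by (simp add: mult_ac)
    qed
    also have "\<dots> = real K * (real K + 1) / real n * (\<Sum>t=2..n + r. ?g t)" by (simp add: sum_distrib_left)
    also have "\<dots> \<le> real K * (real K + 1) / real n * S"
    proof (rule mult_left_mono)
      show "(\<Sum>t=2..n + r. ?g t) \<le> S" unfolding S_def by (rule sum_le_suminf[OF sg]) (use gnn in auto)
    qed simp
    finally show ?thesis .
  qed
  have Kp: "0 < real K" using K by simp
  have "((\<Sum>d=1..n. real K * lam ^ (d + r)) +
         (\<Sum>t=2..n + r. real (t - 1) * (real K * (real K + real t) * lam ^ t / real n))) / (eps * real K)
       \<le> (real K * lam ^ r / (1 - lam) + real K * (real K + 1) / real n * S) / (eps * real K)"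
    by (rule divide_right_mono) (use T1 T2 eps Kp in auto)
  also have "\<dots> = lam ^ r / ((1 - lam) * eps) + (real K + 1) * S / (eps * real n)"
    using Kp eps lam n by (simp add: field_simps)
  finally show ?thesis .
qed

lemma pointwise:
  fixes lam eps :: real
  assumes lam: "0 < lam" "lam < 1" and n: "0 < n" and Kn: "K \<le> n" and r1: "1 \<le> r" and rK: "2 * r < K"
    and eps: "0 < eps" and reps: "2 * real r \<le> eps * real K"
  defines "S \<equiv> suminf (\<lambda>t. real (Suc t) * real (Suc (Suc t)) * lam ^ t)"
  shows "1 - (real n * lam ^ (K - 1) + lam ^ r / ((1 - lam) * eps) + (real K + 1) * S / (eps * real n))
         \<le> measure_pmf.prob (model_P1 n lam K) {(E, W). goodP n K r eps E W}"
proof -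
  define \<delta> where "\<delta> = real n * lam ^ (K - 1) +
        ((\<Sum>d=1..n. real K * lam ^ (d + r)) +
         (\<Sum>t=2..n + r. real (t - 1) * (real K * (real K + real t) * lam ^ t / real n))) / (eps * real K)"
  have K1: "1 \<le> K" using rK by simp
  have "measure_pmf.prob (model_P1 n lam K) {(E, W). goodP n K r eps E W} =
        measure_pmf.prob (pair_pmf (erdos_renyi n (lam / real n)) (random_injection n K))
          {(a, b). goodP n K r eps (a \<union> path_edges K b) (b ` {0..<K})}"
    unfolding model_P1_def by (simp add: vimage_def case_prod_unfold)
  also have "\<dots> \<ge> 1 - \<delta>"
  proof (rule pair_bound)
    fix f assume "f \<in> set_pmf (random_injection n K)"
    then have f: "f \<in> {0..<K} \<rightarrow>\<^sub>E {0..<n}" "inj_on f {0..<K}" using set_RI[OF Kn] by auto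
    have rng: "f ` {0..<K} \<subseteq> {0..<n}" using f(1) by (auto simp: PiE_def Pi_def)
    show "measure_pmf.prob (erdos_renyi n (lam / real n))
            {a. \<not> goodP n K r eps (a \<union> path_edges K f) (f ` {0..<K})} \<le> \<delta>"
      unfolding \<delta>_def by (rule per_f[OF f(2) rng lam n r1 rK eps reps])
  qed
  finally have A: "1 - \<delta> \<le> measure_pmf.prob (model_P1 n lam K) {(E, W). goodP n K r eps E W}" .
  have "\<delta> \<le> real n * lam ^ (K - 1) + (lam ^ r / ((1 - lam) * eps) + (real K + 1) * S / (eps * real n))"
    unfolding \<delta>_def S_def using bound_simp[OF lam n K1 eps, of r] by linarith
  then show ?thesis using A by linarith
qed

lemma K_top:
  assumes lam: "0 < lam" "lam < 1"
    and h: "filterlim (\<lambda>n. real (K n) - ln (real n) / ln (1 / lam)) at_top sequentially"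
  shows "filterlim (\<lambda>n. real (K n)) at_top sequentially"
proof (rule filterlim_at_top_mono[OF h])
  have c: "0 < ln (1 / lam)" using lam by simp
  show "\<forall>\<^sub>F n in sequentially. real (K n) - ln (real n) / ln (1 / lam) \<le> real (K n)"
    using eventually_ge_at_top[of "1::nat"]
  proof eventually_elim
    case (elim n)
    then have "0 \<le> ln (real n)" by simp
    then have "0 \<le> ln (real n) / ln (1 / lam)" using c by simp
    then show ?case by simp
  qed
qed

lemma A1:
  assumes lam: "0 < lam" "lam < 1"
    and h: "filterlim (\<lambda>n. real (K n) - ln (real n) / ln (1 / lam)) at_top sequentially"
  shows "(\<lambda>n. real n * lam ^ (K n - 1)) \<longlonglongrightarrow> 0"
proof -
  define c where "c = ln (1 / lam)"
  have c: "0 < c" using lam unfolding c_def by simp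
  have lnl: "ln lam = - c" unfolding c_def using lam by (simp add: ln_div)
  define X where "X n = real (K n) - ln (real n) / c" for n
  have Xt: "filterlim X at_top sequentially" using h unfolding X_def c_def .
  have cX: "filterlim (\<lambda>n. c * X n) at_top sequentially"
    using filterlim_tendsto_pos_mult_at_top[OF tendsto_const c Xt] by simp
  have lim: "(\<lambda>n. exp c * inverse (exp (c * X n))) \<longlonglongrightarrow> 0"
  proof -
    have "(\<lambda>n. inverse (exp (c * X n))) \<longlonglongrightarrow> 0"
    proof -
      have e: "filterlim (\<lambda>n. exp (c * X n)) at_top sequentially"
        using filterlim_compose[OF exp_at_top cX] by simp
      show ?thesis by (rule tendsto_inverse_0_at_top[OF e])
    qed
    then show ?thesis by (rule tendsto_mult_right_zero)
  qed
  have Kt: "filterlim (\<lambda>n. real (K n)) at_top sequentially" by (rule K_top[OF lam h])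
  have ev: "\<forall>\<^sub>F n in sequentially. exp c * inverse (exp (c * X n)) = real n * lam ^ (K n - 1)"
    using eventually_ge_at_top[of "1::nat"] filterlim_at_top_dense[THEN iffD1, OF Kt, rule_format, of 1]
  proof eventually_elim
    case (elim n)
    have K1: "1 \<le> K n" using elim(2) by simp
    have "exp c * inverse (exp (c * X n)) = exp (c - c * X n)" by (simp add: exp_diff field_simps)
    also have "c - c * X n = ln (real n) + real (K n - 1) * ln lam"
      unfolding X_def lnl using c K1 by (simp add: field_simps of_nat_diff)
    also have "exp (ln (real n) + real (K n - 1) * ln lam) = real n * lam ^ (K n - 1)"
      using elim(1) lam by (simp add: exp_add exp_of_nat_mult)
    finally show ?case .
  qed
  show ?thesis by (rule Lim_transform_eventually[OF lim ev])
qed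

lemma r_top:
  assumes Kt: "filterlim (\<lambda>n. real (K n)) at_top sequentially"
  shows "filterlim (\<lambda>n. nat \<lfloor>sqrt (real (K n))\<rfloor>) at_top sequentially"
  unfolding filterlim_at_top
proof
  fix Z :: nat
  have "\<forall>\<^sub>F n in sequentially. (real Z + 1)\<^sup>2 \<le> real (K n)"
    using Kt unfolding filterlim_at_top by blast
  then show "\<forall>\<^sub>F n in sequentially. Z \<le> nat \<lfloor>sqrt (real (K n))\<rfloor>"
  proof eventually_elim
    case (elim n)
    have "sqrt ((real Z + 1)\<^sup>2) \<le> sqrt (real (K n))" using elim by (rule real_sqrt_le_mono)
    then have "real Z + 1 \<le> sqrt (real (K n))" by simp
    then have "real Z \<le> sqrt (real (K n))" by simp
    then have "int Z \<le> \<lfloor>sqrt (real (K n))\<rfloor>" by (simp add: le_floor_iff)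
    then show ?case by simp
  qed
qed

lemma r_le_sqrt: "real (nat \<lfloor>sqrt (real k)\<rfloor>) \<le> sqrt (real k)"
proof -
  have "0 \<le> \<lfloor>sqrt (real k)\<rfloor>" by simp
  then have "real (nat \<lfloor>sqrt (real k)\<rfloor>) = real_of_int \<lfloor>sqrt (real k)\<rfloor>" by simp
  also have "\<dots> \<le> sqrt (real k)" by (rule of_int_floor_le)
  finally show ?thesis .
qed

lemma A3:
  assumes h: "(\<lambda>n. real (K n) / (real n / ln (real n))) \<longlonglongrightarrow> 0"
  shows "(\<lambda>n. (real (K n) + 1) / real n) \<longlonglongrightarrow> 0"
proof -
  have l1: "(\<lambda>n. 1 / ln (real n)) \<longlonglongrightarrow> 0" by real_asymp
  have l2: "(\<lambda>n. 1 / real n) \<longlonglongrightarrow> (0::real)" by real_asymp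
  have lim: "(\<lambda>n. real (K n) / (real n / ln (real n)) * (1 / ln (real n)) + 1 / real n) \<longlonglongrightarrow> 0 * 0 + 0"
    by (intro tendsto_add tendsto_mult h l1 l2)
  have ev: "\<forall>\<^sub>F n in sequentially. real (K n) / (real n / ln (real n)) * (1 / ln (real n)) + 1 / real n =
          (real (K n) + 1) / real n"
    using eventually_ge_at_top[of "2::nat"]
  proof eventually_elim
    case (elim n)
    then have "0 < ln (real n)" by simp
    then show ?case using elim by (simp add: field_simps)
  qed
  show ?thesis using Lim_transform_eventually[OF lim ev] by simp
qed

theorem lemma5:
  fixes lam :: real and K :: "nat \<Rightarrow> nat"
  assumes "0 < lam" and "lam < 1"
    and "filterlim (\<lambda>n. real (K n) - ln (real n) / ln (1 / lam)) at_top sequentially"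
    and "(\<lambda>n. real (K n) / (real n / ln (real n))) \<longlonglongrightarrow> 0"
  shows "\<forall>\<epsilon>>0. (\<lambda>n. measure_pmf.prob (model_P1 n lam (K n))
           {(E, W). \<forall>xs. is_longest_path n E xs \<longrightarrow>
              (let C' = (peel E ^^ nat \<lfloor>sqrt (real (K n))\<rfloor>) (component n E (hd xs))
               in \<bar>real (card C') - real (K n)\<bar> \<le> \<epsilon> * real (K n) \<and>
                  \<bar>real (card (C' \<inter> W)) - real (K n)\<bar> \<le> \<epsilon> * real (K n))})
         \<longlonglongrightarrow> 1"
proof (intro allI impI)
  fix eps :: real assume eps: "0 < eps"
  have lam: "0 < lam" "lam < 1" using assms(1,2) .
  define r where "r n = nat \<lfloor>sqrt (real (K n))\<rfloor>" for n
  define S where "S = suminf (\<lambda>t. real (Suc t) * real (Suc (Suc t)) * lam ^ t)"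
  define P where "P n = measure_pmf.prob (model_P1 n lam (K n)) {(E, W). goodP n (K n) (r n) eps E W}" for n
  define b where "b n = real n * lam ^ (K n - 1) + lam ^ r n / ((1 - lam) * eps) +
                        (real (K n) + 1) * S / (eps * real n)" for n
  have Kt: "filterlim (\<lambda>n. real (K n)) at_top sequentially" by (rule K_top[OF lam assms(3)])
  have rt: "filterlim r at_top sequentially" unfolding r_def by (rule r_top[OF Kt])
  have b0: "b \<longlonglongrightarrow> 0"
  proof -
    have t1: "(\<lambda>n. real n * lam ^ (K n - 1)) \<longlonglongrightarrow> 0" by (rule A1[OF lam assms(3)])
    have "(\<lambda>n. lam ^ r n) \<longlonglongrightarrow> 0"
      by (rule filterlim_compose[OF LIMSEQ_power_zero rt]) (use lam in simp)
    then have t2: "(\<lambda>n. lam ^ r n / ((1 - lam) * eps)) \<longlonglongrightarrow> 0"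
      using tendsto_divide_zero by blast
    have "(\<lambda>n. (real (K n) + 1) / real n) \<longlonglongrightarrow> 0" by (rule A3[OF assms(4)])
    then have "(\<lambda>n. S / eps * ((real (K n) + 1) / real n)) \<longlonglongrightarrow> 0"
      by (rule tendsto_mult_right_zero)
    then have t3: "(\<lambda>n. (real (K n) + 1) * S / (eps * real n)) \<longlonglongrightarrow> 0"
      by (simp add: field_simps)
    have "(\<lambda>n. real n * lam ^ (K n - 1) + lam ^ r n / ((1 - lam) * eps) +
              (real (K n) + 1) * S / (eps * real n)) \<longlonglongrightarrow> 0 + 0 + 0"
      by (intro tendsto_add t1 t2 t3)
    then show ?thesis unfolding b_def by simp
  qed
  have ev: "\<forall>\<^sub>F n in sequentially. 1 - b n \<le> P n"
  proof -
    have e1: "\<forall>\<^sub>F n in sequentially. (real (K n) + 1) / real n < 1"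
      using A3[OF assms(4)] by (rule order_tendstoD) simp
    have e2: "\<forall>\<^sub>F n in sequentially. 1 \<le> r n" using rt unfolding filterlim_at_top by blast
    have e3: "\<forall>\<^sub>F n in sequentially. 5 + (2 / eps)\<^sup>2 \<le> real (K n)" using Kt unfolding filterlim_at_top by blast
    show ?thesis using e1 e2 e3 eventually_ge_at_top[of "1::nat"]
    proof eventually_elim
      case (elim n)
      have n: "0 < n" using elim(4) by simp
      have Kn: "K n \<le> n" using elim(1) n by (simp add: field_simps)
      define s where "s = sqrt (real (K n))"
      have s0: "0 \<le> s" unfolding s_def by simp
      have ss: "s * s = real (K n)" unfolding s_def by simp
      have rs: "real (r n) \<le> s" unfolding r_def s_def by (rule r_le_sqrt)
      have s2: "2 < s"
      proof -
        have "sqrt 5 \<le> s" unfolding s_def using elim(3) by (intro real_sqrt_le_mono) (smt (verit) zero_le_power2)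
        moreover have "2 < sqrt (5::real)" by (simp add: real_less_rsqrt)
        ultimately show ?thesis by simp
      qed
      have se: "2 / eps \<le> s"
      proof -
        have "sqrt ((2 / eps)\<^sup>2) \<le> s" unfolding s_def using elim(3) by (intro real_sqrt_le_mono) simp
        then show ?thesis using eps by simp
      qed
      have rK: "2 * r n < K n"
      proof -
        have "2 * real (r n) \<le> 2 * s" using rs by simp
        also have "\<dots> < s * s" using s2 by (simp add: mult_strict_right_mono)
        finally have "real (2 * r n) < real (K n)" using ss by simp
        then show ?thesis by (simp only: of_nat_less_iff)
      qed
      have reps: "2 * real (r n) \<le> eps * real (K n)"
      proof -
        have "2 * real (r n) \<le> 2 * s" using rs by simp
        also have "\<dots> = eps * (2 / eps) * s" using eps by simp
        also have "\<dots> \<le> eps * s * s"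
        proof -
          have "2 \<le> eps * s" using se eps by (simp add: divide_le_eq mult.commute)
          then have "2 * s \<le> eps * s * s" using mult_right_mono[OF _ s0] by blast
          then show ?thesis using eps by simp
        qed
        also have "\<dots> = eps * real (K n)" using ss by (simp add: mult.assoc)
        finally show ?thesis .
      qed
      show ?case unfolding P_def b_def S_def
        using pointwise[OF lam n Kn elim(2) rK eps reps] by simp
    qed
  qed
  have ev2: "\<forall>\<^sub>F n in sequentially. P n \<le> 1" unfolding P_def by simp
  have lim1: "(\<lambda>n. 1 - b n) \<longlonglongrightarrow> 1" using tendsto_diff[OF tendsto_const b0, of 1] by simp
  have "P \<longlonglongrightarrow> 1" by (rule tendsto_sandwich[OF ev ev2 lim1 tendsto_const])
  then show "(\<lambda>n. measure_pmf.prob (model_P1 n lam (K n))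
           {(E, W). \<forall>xs. is_longest_path n E xs \<longrightarrow>
              (let C' = (peel E ^^ nat \<lfloor>sqrt (real (K n))\<rfloor>) (component n E (hd xs))
               in \<bar>real (card C') - real (K n)\<bar> \<le> eps * real (K n) \<and>
                  \<bar>real (card (C' \<inter> W)) - real (K n)\<bar> \<le> eps * real (K n))})
         \<longlonglongrightarrow> 1"
    unfolding P_def r_def goodP_def by simp
qed

end
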